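(* Every regular tree language $L\subseteq T^\omega_\Sigma$ that is countable (contains only countably many trees) is unambiguous, i.e. it is accepted by a parity tree automaton $\mathcal{A}$ with $|ACC(\mathcal{A},t)|\le 1$ for every tree $t$.
   Context: $T^\omega_\Sigma$ is the set of functions $t:\{l,r\}^*\to\Sigma$ for a finite alphabet $\Sigma$. A parity tree automaton (PTA) $\mathcal{A}=(Q,\Sigma,Q_I,\delta,\mathbb{C})$ ($Q$ finite, $Q_I\subseteq Q$, $\delta\subseteq Q\times\Sigma\times Q\times Q$, $\mathbb{C}:Q\to\mathbb{N}$) has computations $\phi:\{l,r\}^*\to Q$ on $t$ with $\phi(\epsilon)\in Q_I$, $(\phi(v),t(v),\phi(vl),\phi(vr))\in\delta$ for all $v$, accepting if on every branch the largest color seen infinitely often is even; $ACC(\mathcal{A},t)$ is the set of accepting computations. A tree language is regular if it equals $\{t\mid ACC(\mathcal{A},t)\ne\emptyset\}$ for some PTA $\mathcal{A}$. *)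

theory Defs
  imports Main "HOL-Library.Countable_Set"
begin

datatype dir = Lft | Rgt

type_synonym 'a tree = "dir list \<Rightarrow> 'a"

record 'a pta =
  states :: "nat set"
  initial :: "nat set"
  trans :: "(nat \<times> 'a \<times> nat \<times> nat) set"
  color :: "nat \<Rightarrow> nat"

definition wf_pta :: "'a pta \<Rightarrow> bool" where
  "wf_pta A \<longleftrightarrow> finite (states A) \<and> initial A \<subseteq> states A \<and>
     trans A \<subseteq> states A \<times> UNIV \<times> states A \<times> states A"

definition node :: "(nat \<Rightarrow> dir) \<Rightarrow> nat \<Rightarrow> dir list" where
  "node b n = map b [0..<n]"

definition computation :: "'a pta \<Rightarrow> 'a tree \<Rightarrow> (dir list \<Rightarrow> nat) \<Rightarrow> bool" where
  "computation A t \<phi> \<longleftrightarrow> \<phi> [] \<in> initial A \<and>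
     (\<forall>v. (\<phi> v, t v, \<phi> (v @ [Lft]), \<phi> (v @ [Rgt])) \<in> trans A)"

definition accepting :: "'a pta \<Rightarrow> (dir list \<Rightarrow> nat) \<Rightarrow> bool" where
  "accepting A \<phi> \<longleftrightarrow> (\<forall>b :: nat \<Rightarrow> dir.
     even (Max {c. \<exists>\<^sub>\<infinity>n. color A (\<phi> (node b n)) = c}))"

definition ACC :: "'a pta \<Rightarrow> 'a tree \<Rightarrow> (dir list \<Rightarrow> nat) set" where
  "ACC A t = {\<phi>. computation A t \<phi> \<and> accepting A \<phi>}"

definition lang :: "'a pta \<Rightarrow> 'a tree set" where
  "lang A = {t. ACC A t \<noteq> {}}"

definition regular :: "('a::finite) tree set \<Rightarrow> bool" where
  "regular L \<longleftrightarrow> (\<exists>A. wf_pta A \<and> L = lang A)"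

definition unambiguous :: "('a::finite) tree set \<Rightarrow> bool" where
  "unambiguous L \<longleftrightarrow> (\<exists>A. wf_pta A \<and> L = lang A \<and>
     (\<forall>t. finite (ACC A t) \<and> card (ACC A t) \<le> 1))"

end

theory Submission
  imports Defs "HOL-Library.Sublist" "HOL-Library.Nat_Bijection"
begin

definition sub :: "'a tree \<Rightarrow> dir list \<Rightarrow> 'a tree" where
  "sub t v = (\<lambda>u. t (v @ u))"

definition subtrees :: "'a tree \<Rightarrow> 'a tree set" where
  "subtrees t = range (sub t)"

definition Reg :: "nat \<Rightarrow> 'a tree \<Rightarrow> bool" where
  "Reg K t \<longleftrightarrow> finite (subtrees t) \<and> card (subtrees t) \<le> K"

fun flip :: "dir \<Rightarrow> dir" where
  "flip Lft = Rgt" | "flip Rgt = Lft"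

lemma flip_neq[simp]: "flip d \<noteq> d"
  by (cases d) auto

lemma neq_flip: "d \<noteq> d' \<Longrightarrow> d' = flip d"
  by (cases d; cases d') auto

lemma dir_UNIV: "(UNIV :: dir set) = {Lft, Rgt}"
  using dir.exhaust by auto

instance dir :: finite
  by standard (simp add: dir_UNIV)

definition comp_from :: "'a pta \<Rightarrow> nat \<Rightarrow> 'a tree \<Rightarrow> (dir list \<Rightarrow> nat) \<Rightarrow> bool" where
  "comp_from A r t \<phi> \<longleftrightarrow> \<phi> [] = r \<and>
     (\<forall>v. (\<phi> v, t v, \<phi> (v @ [Lft]), \<phi> (v @ [Rgt])) \<in> trans A)"

definition infset :: "(nat \<Rightarrow> nat) \<Rightarrow> nat set" where
  "infset f = {c. \<exists>\<^sub>\<infinity>n. f n = c}"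

definition accseq :: "(nat \<Rightarrow> nat) \<Rightarrow> bool" where
  "accseq f \<longleftrightarrow> even (Max (infset f))"

lemma accepting_accseq:
  "accepting A \<phi> \<longleftrightarrow> (\<forall>b. accseq (\<lambda>n. color A (\<phi> (node b n))))"
  unfolding accepting_def accseq_def infset_def by simp

definition Lq :: "'a pta \<Rightarrow> nat \<Rightarrow> 'a tree set" where
  "Lq A r = {t. \<exists>\<phi>. comp_from A r t \<phi> \<and> accepting A \<phi>}"

lemma computation_comp_from:
  "computation A t \<phi> \<longleftrightarrow> \<phi> [] \<in> initial A \<and> comp_from A (\<phi> []) t \<phi>"
  unfolding computation_def comp_from_def by auto

lemma lang_Lq: "lang A = (\<Union>r\<in>initial A. Lq A r)"
  unfolding lang_def ACC_def Lq_def computation_comp_from by (fastforce simp: comp_from_def)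

lemma length_node[simp]: "length (node b n) = n"
  by (simp add: node_def)

lemma node_0[simp]: "node b 0 = []"
  by (simp add: node_def)

lemma node_Suc: "node b (Suc n) = node b n @ [b n]"
  by (simp add: node_def)

lemma node_nth: "k < n \<Longrightarrow> node b n ! k = b k"
  by (simp add: node_def)

lemma node_add: "node b (n + m) = node b n @ node (\<lambda>i. b (n + i)) m"
  by (induction m) (simp_all add: node_Suc)

lemma take_node: "k \<le> n \<Longrightarrow> take k (node b n) = node b k"
  by (simp add: node_def take_map)

lemma node_prefix: "k \<le> n \<Longrightarrow> \<exists>z. node b n = node b k @ z"
  using node_add[of b k "n - k"] by auto

definition through :: "dir list \<Rightarrow> (nat \<Rightarrow> dir) \<Rightarrow> (nat \<Rightarrow> dir)" where
  "through v b = (\<lambda>i. if i < length v then v ! i else b (i - length v))"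

lemma node_through: "node (through v b) (length v + n) = v @ node b n"
proof -
  have "node (through v b) (length v) = v"
    by (rule nth_equalityI) (auto simp: node_def through_def)
  moreover have "node (\<lambda>i. through v b (length v + i)) n = node b n"
    unfolding node_def through_def by (intro map_cong) auto
  ultimately show ?thesis by (simp add: node_add)
qed

lemma INFM_shift: "(\<exists>\<^sub>\<infinity>n. P (n + k)) \<longleftrightarrow> (\<exists>\<^sub>\<infinity>n::nat. P n)"
proof
  assume "\<exists>\<^sub>\<infinity>n. P (n + k)"
  then show "\<exists>\<^sub>\<infinity>n. P n"
    unfolding INFM_nat
  proof (intro allI)
    fix m
    assume h: "\<forall>m. \<exists>n>m. P (n + k)"
    then obtain n where "n > m" "P (n + k)" by blast
    then show "\<exists>n>m. P n" by (intro exI[of _ "n + k"]) auto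
  qed
next
  assume a: "\<exists>\<^sub>\<infinity>n. P n"
  show "\<exists>\<^sub>\<infinity>n. P (n + k)"
    unfolding INFM_nat
  proof
    fix m
    from a obtain n where "n > m + k" "P n" unfolding INFM_nat by blast
    then show "\<exists>n>m. P (n + k)" by (intro exI[of _ "n - k"]) auto
  qed
qed

lemma INFM_eventually_eq:
  assumes "\<forall>n\<ge>n1. f n = g n"
  shows "(\<exists>\<^sub>\<infinity>n::nat. P (f n)) \<longleftrightarrow> (\<exists>\<^sub>\<infinity>n. P (g n))"
proof -
  have "(\<exists>\<^sub>\<infinity>n::nat. P (f n)) \<longleftrightarrow> (\<exists>\<^sub>\<infinity>n. P (f n) \<and> n \<ge> n1)"
    using INFM_conjI[OF _ MOST_ge_nat[of n1]] by (auto elim: INFM_mono)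
  also have "\<dots> \<longleftrightarrow> (\<exists>\<^sub>\<infinity>n. P (g n) \<and> n \<ge> n1)"
  proof
    assume "\<exists>\<^sub>\<infinity>n. P (f n) \<and> n \<ge> n1"
    then show "\<exists>\<^sub>\<infinity>n. P (g n) \<and> n \<ge> n1" by (rule INFM_mono) (use assms in auto)
  next
    assume "\<exists>\<^sub>\<infinity>n. P (g n) \<and> n \<ge> n1"
    then show "\<exists>\<^sub>\<infinity>n. P (f n) \<and> n \<ge> n1" by (rule INFM_mono) (use assms in auto)
  qed
  also have "\<dots> \<longleftrightarrow> (\<exists>\<^sub>\<infinity>n. P (g n))"
    using INFM_conjI[OF _ MOST_ge_nat[of n1]] by (auto elim: INFM_mono)
  finally show ?thesis .
qed

lemma infset_shift_eq:
  assumes "\<forall>n\<ge>n1. f (n + c1) = g (n + c2)"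
  shows "infset f = infset g"
proof -
  have "(\<exists>\<^sub>\<infinity>n. f n = c) \<longleftrightarrow> (\<exists>\<^sub>\<infinity>n. g n = c)" for c
  proof -
    have "(\<exists>\<^sub>\<infinity>n. f n = c) \<longleftrightarrow> (\<exists>\<^sub>\<infinity>n. f (n + c1) = c)"
      using INFM_shift[of "\<lambda>n. f n = c" c1] by simp
    also have "\<dots> \<longleftrightarrow> (\<exists>\<^sub>\<infinity>n. g (n + c2) = c)"
      using INFM_eventually_eq[of n1 "\<lambda>n. f (n + c1)" "\<lambda>n. g (n + c2)" "\<lambda>x. x = c"] assms by simp
    also have "\<dots> \<longleftrightarrow> (\<exists>\<^sub>\<infinity>n. g n = c)"
      using INFM_shift[of "\<lambda>n. g n = c" c2] by simp
    finally show ?thesis .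
  qed
  then show ?thesis unfolding infset_def by simp
qed

lemma accseq_shift_eq:
  assumes "\<forall>n\<ge>n1. f (n + c1) = g (n + c2)"
  shows "accseq f \<longleftrightarrow> accseq g"
  using infset_shift_eq[OF assms] unfolding accseq_def by simp

lemma infset_finite_range:
  assumes "range f \<subseteq> S" "finite S"
  shows "finite (infset f)" "infset f \<noteq> {}" "infset f \<subseteq> S"
proof -
  show "infset f \<subseteq> S"
  proof
    fix x assume "x \<in> infset f"
    then obtain n where "f n = x" unfolding infset_def by (auto dest: INFM_EX)
    then show "x \<in> S" using assms(1) by auto
  qed
  then show "finite (infset f)" using assms(2) finite_subset by blast
  have "\<exists>\<^sub>\<infinity>n. \<exists>c\<in>S. f n = c" using assms(1) by (auto simp: INFM_nat)
  then have "\<exists>c\<in>S. \<exists>\<^sub>\<infinity>n. f n = c" using INFM_finite_Bex_distrib[OF assms(2), of "\<lambda>c n. f n = c"] by simp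
  then show "infset f \<noteq> {}" unfolding infset_def by auto
qed

lemma eventually_in_infset:
  assumes "range f \<subseteq> S" "finite S"
  shows "\<exists>N. \<forall>n\<ge>N. f n \<in> infset f"
proof -
  have "\<forall>c\<in>S - infset f. finite {n. f n = c}"
    unfolding infset_def by (auto simp: INFM_iff_infinite)
  then have "finite (\<Union>c\<in>S - infset f. {n. f n = c})" using assms(2) by auto
  then obtain N where N: "(\<Union>c\<in>S - infset f. {n. f n = c}) \<subseteq> {..<N}"
    using finite_nat_bounded by blast
  have "f n \<in> infset f" if "n \<ge> N" for n
  proof (rule ccontr)
    assume "f n \<notin> infset f"
    then have "n \<in> (\<Union>c\<in>S - infset f. {n. f n = c})" using assms(1) by auto
    then show False using N that by auto
  qed
  then show ?thesis by blast
qed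


section \<open>Runs: shifting, combining, grafting\<close>

lemma sub_sub[simp]: "sub (sub t v) w = sub t (v @ w)"
  by (simp add: sub_def)

lemma sub_Nil[simp]: "sub t [] = t"
  by (simp add: sub_def)

lemma sub_app: "sub t v u = t (v @ u)"
  by (simp add: sub_def)

lemma comp_from_sub:
  assumes "comp_from A r t \<phi>"
  shows "comp_from A (\<phi> v) (sub t v) (sub \<phi> v)"
  using assms unfolding comp_from_def sub_def
  by (metis append.assoc append_Nil2)

lemma accepting_sub:
  assumes "accepting A \<phi>"
  shows "accepting A (sub \<phi> v)"
  unfolding accepting_accseq
proof
  fix b
  have "accseq (\<lambda>n. color A (\<phi> (node (through v b) n)))"
    using assms unfolding accepting_accseq by blast
  moreover have "\<forall>n\<ge>0. color A (sub \<phi> v (node b (n + 0))) =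
                 color A (\<phi> (node (through v b) (n + length v)))"
  proof (intro allI impI)
    fix n :: nat
    have "node (through v b) (n + length v) = v @ node b n"
      using node_through[of v b n] by (simp add: add.commute)
    then show "color A (sub \<phi> v (node b (n + 0))) = color A (\<phi> (node (through v b) (n + length v)))"
      by (simp add: sub_def)
  qed
  ultimately show "accseq (\<lambda>n. color A (sub \<phi> v (node b n)))"
    using accseq_shift_eq[of 0 "\<lambda>n. color A (sub \<phi> v (node b n))" 0 "\<lambda>n. color A (\<phi> (node (through v b) n))" "length v"] by simp
qed

lemma Lq_sub:
  assumes "comp_from A r t \<phi>" "accepting A \<phi>"
  shows "sub t v \<in> Lq A (\<phi> v)"
  using comp_from_sub[OF assms(1)] accepting_sub[OF assms(2)] unfolding Lq_def by blast

lemma comp_states: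
  assumes "wf_pta A" "comp_from A r t \<phi>" "r \<in> states A"
  shows "\<phi> v \<in> states A"
proof (induction v rule: rev_induct)
  case Nil
  then show ?case using assms(2,3) by (simp add: comp_from_def)
next
  case (snoc d v)
  have "(\<phi> v, t v, \<phi> (v @ [Lft]), \<phi> (v @ [Rgt])) \<in> trans A"
    using assms(2) by (simp add: comp_from_def)
  then have "\<phi> (v @ [Lft]) \<in> states A \<and> \<phi> (v @ [Rgt]) \<in> states A"
    using assms(1) unfolding wf_pta_def by blast
  then show ?case by (cases d) auto
qed

lemma node_Suc': "node b (Suc n) = b 0 # node (\<lambda>i. b (Suc i)) n"
  unfolding node_def by (simp add: map_upt_Suc del: upt_Suc)

lemma Lq_local:
  "t \<in> Lq A r \<longleftrightarrow> (\<exists>q1 q2. (r, t [], q1, q2) \<in> trans A \<and> sub t [Lft] \<in> Lq A q1 \<and> sub t [Rgt] \<in> Lq A q2)"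
proof
  assume "t \<in> Lq A r"
  then obtain \<phi> where c: "comp_from A r t \<phi>" and a: "accepting A \<phi>" unfolding Lq_def by blast
  have "(r, t [], \<phi> [Lft], \<phi> [Rgt]) \<in> trans A"
    using c unfolding comp_from_def by (metis append_Nil)
  then show "\<exists>q1 q2. (r, t [], q1, q2) \<in> trans A \<and> sub t [Lft] \<in> Lq A q1 \<and> sub t [Rgt] \<in> Lq A q2"
    using Lq_sub[OF c a] by blast
next
  assume "\<exists>q1 q2. (r, t [], q1, q2) \<in> trans A \<and> sub t [Lft] \<in> Lq A q1 \<and> sub t [Rgt] \<in> Lq A q2"
  then obtain q1 q2 \<psi>1 \<psi>2 where tr: "(r, t [], q1, q2) \<in> trans A"
    and c1: "comp_from A q1 (sub t [Lft]) \<psi>1" and a1: "accepting A \<psi>1"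
    and c2: "comp_from A q2 (sub t [Rgt]) \<psi>2" and a2: "accepting A \<psi>2"
    unfolding Lq_def by blast
  define \<psi> where "\<psi> d = (case d of Lft \<Rightarrow> \<psi>1 | Rgt \<Rightarrow> \<psi>2)" for d
  define \<phi> where "\<phi> u = (case u of [] \<Rightarrow> r | d # u' \<Rightarrow> \<psi> d u')" for u
  have cd: "comp_from A (\<phi> [d]) (sub t [d]) (\<psi> d)" for d
    using c1 c2 by (cases d) (auto simp: \<psi>_def \<phi>_def comp_from_def)
  have ad: "accepting A (\<psi> d)" for d
    using a1 a2 by (cases d) (auto simp: \<psi>_def)
  have "comp_from A r t \<phi>"
    unfolding comp_from_def
  proof (intro conjI allI)
    show "\<phi> [] = r" by (simp add: \<phi>_def)
    fix v
    show "(\<phi> v, t v, \<phi> (v @ [Lft]), \<phi> (v @ [Rgt])) \<in> trans A"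
    proof (cases v)
      case Nil
      then show ?thesis using tr c1 c2 by (simp add: \<phi>_def \<psi>_def comp_from_def)
    next
      case (Cons d v')
      have "(\<psi> d v', sub t [d] v', \<psi> d (v' @ [Lft]), \<psi> d (v' @ [Rgt])) \<in> trans A"
        using cd[of d] unfolding comp_from_def by blast
      then show ?thesis using Cons by (simp add: \<phi>_def sub_def)
    qed
  qed
  moreover have "accepting A \<phi>"
    unfolding accepting_accseq
  proof
    fix b
    have "accseq (\<lambda>n. color A (\<psi> (b 0) (node (\<lambda>i. b (Suc i)) n)))"
      using ad unfolding accepting_accseq by blast
    moreover have "\<forall>n\<ge>0. color A (\<phi> (node b (n + 1))) = color A (\<psi> (b 0) (node (\<lambda>i. b (Suc i)) (n + 0)))"
      by (simp add: node_Suc' \<phi>_def)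
    ultimately show "accseq (\<lambda>n. color A (\<phi> (node b n)))"
      using accseq_shift_eq[of 0 "\<lambda>n. color A (\<phi> (node b n))" 1 "\<lambda>n. color A (\<psi> (b 0) (node (\<lambda>i. b (Suc i)) n))" 0] by simp
  qed
  ultimately show "t \<in> Lq A r" unfolding Lq_def by blast
qed

definition antichain :: "dir list set \<Rightarrow> bool" where
  "antichain W \<longleftrightarrow> (\<forall>w\<in>W. \<forall>w'\<in>W. prefix w w' \<longrightarrow> w = w')"

definition graft :: "dir list set \<Rightarrow> (dir list \<Rightarrow> 'b) \<Rightarrow> (dir list \<Rightarrow> dir list \<Rightarrow> 'b) \<Rightarrow> dir list \<Rightarrow> 'b" where
  "graft W t s u = (if \<exists>w\<in>W. prefix w u
      then s (THE w. w \<in> W \<and> prefix w u) (drop (length (THE w. w \<in> W \<and> prefix w u)) u)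
      else t u)"

lemma graft_in:
  assumes "antichain W" "w \<in> W"
  shows "graft W t s (w @ z) = s w z"
proof -
  have "(THE w'. w' \<in> W \<and> prefix w' (w @ z)) = w"
  proof (rule the_equality)
    show "w \<in> W \<and> prefix w (w @ z)" using assms(2) by simp
    fix w' assume "w' \<in> W \<and> prefix w' (w @ z)"
    then have "w' \<in> W" "prefix w' (w @ z)" by auto
    moreover have "prefix w (w @ z)" by simp
    ultimately have "prefix w' w \<or> prefix w w'" using prefix_same_cases by blast
    then show "w' = w" using assms \<open>w' \<in> W\<close> unfolding antichain_def by metis
  qed
  then show ?thesis using assms(2) unfolding graft_def by auto
qed

lemma graft_out:
  assumes "\<not> (\<exists>w\<in>W. prefix w u)"
  shows "graft W t s u = t u"
  using assms unfolding graft_def by auto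

lemma prefix_node: "prefix w (node b m) \<Longrightarrow> w = node b (length w)"
  by (metis prefix_def append_eq_conv_conj prefix_length_le take_node length_node)

lemma graft_run:
  assumes c: "comp_from A r t \<phi>" and a: "accepting A \<phi>" and W: "antichain W"
    and cw: "\<And>w. w \<in> W \<Longrightarrow> comp_from A (\<phi> w) (s w) (\<psi> w)"
    and aw: "\<And>w. w \<in> W \<Longrightarrow> accepting A (\<psi> w)"
  shows "comp_from A r (graft W t s) (graft W \<phi> \<psi>) \<and> accepting A (graft W \<phi> \<psi>)"
proof
  have ch: "graft W \<phi> \<psi> (v @ [d]) = \<phi> (v @ [d])" if "\<not> (\<exists>w\<in>W. prefix w v)" for v d
  proof (cases "\<exists>w\<in>W. prefix w (v @ [d])")
    case True
    then obtain w where "w \<in> W" "prefix w (v @ [d])" by blast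
    then have "w = v @ [d]" using that by (auto simp: prefix_snoc)
    then have "graft W \<phi> \<psi> (v @ [d]) = \<psi> w []" using graft_in[OF W \<open>w \<in> W\<close>, of \<phi> \<psi> "[]"] by simp
    also have "\<dots> = \<phi> w" using cw[OF \<open>w \<in> W\<close>] by (simp add: comp_from_def)
    finally show ?thesis using \<open>w = v @ [d]\<close> by simp
  next
    case False
    then show ?thesis by (simp add: graft_out)
  qed
  show "comp_from A r (graft W t s) (graft W \<phi> \<psi>)"
    unfolding comp_from_def
  proof (intro conjI allI)
    show "graft W \<phi> \<psi> [] = r"
    proof (cases "\<exists>w\<in>W. prefix w []")
      case True
      then have "[] \<in> W" by auto
      then show ?thesis using graft_in[OF W, of "[]" \<phi> \<psi> "[]"] cw[of "[]"] c by (simp add: comp_from_def)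
    next
      case False
      then show ?thesis using c by (simp add: graft_out comp_from_def)
    qed
    fix v
    show "(graft W \<phi> \<psi> v, graft W t s v, graft W \<phi> \<psi> (v @ [Lft]), graft W \<phi> \<psi> (v @ [Rgt])) \<in> trans A"
    proof (cases "\<exists>w\<in>W. prefix w v")
      case True
      then obtain w z where w: "w \<in> W" "v = w @ z" by (auto simp: prefix_def)
      have "(\<psi> w z, s w z, \<psi> w (z @ [Lft]), \<psi> w (z @ [Rgt])) \<in> trans A"
        using cw[OF w(1)] by (simp add: comp_from_def)
      then show ?thesis using w graft_in[OF W w(1)] by (metis append.assoc)
    next
      case False
      then show ?thesis using c ch[OF False] by (simp add: graft_out comp_from_def)
    qed
  qed
  show "accepting A (graft W \<phi> \<psi>)"
    unfolding accepting_accseq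
  proof
    fix b
    show "accseq (\<lambda>n. color A (graft W \<phi> \<psi> (node b n)))"
    proof (cases "\<exists>n. node b n \<in> W")
      case True
      then obtain n where n: "node b n \<in> W" by blast
      let ?w = "node b n"
      have "accseq (\<lambda>m. color A (\<psi> ?w (node (\<lambda>i. b (n + i)) m)))"
        using aw[OF n] unfolding accepting_accseq by blast
      moreover have "\<forall>m\<ge>0. color A (graft W \<phi> \<psi> (node b (m + n))) = color A (\<psi> ?w (node (\<lambda>i. b (n + i)) (m + 0)))"
      proof (intro allI impI)
        fix m :: nat
        have "node b (m + n) = ?w @ node (\<lambda>i. b (n + i)) m"
          using node_add[of b n m] by (simp add: add.commute)
        then show "color A (graft W \<phi> \<psi> (node b (m + n))) = color A (\<psi> ?w (node (\<lambda>i. b (n + i)) (m + 0)))"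
          using graft_in[OF W n, of \<phi> \<psi> "node (\<lambda>i. b (n + i)) m"] by simp
      qed
      ultimately show ?thesis
        using accseq_shift_eq[of 0 "\<lambda>m. color A (graft W \<phi> \<psi> (node b m))" n "\<lambda>m. color A (\<psi> ?w (node (\<lambda>i. b (n + i)) m))" 0] by simp
    next
      case False
      have "graft W \<phi> \<psi> (node b m) = \<phi> (node b m)" for m
      proof (rule graft_out)
        show "\<not> (\<exists>w\<in>W. prefix w (node b m))"
          using False prefix_node by metis
      qed
      then show ?thesis using a unfolding accepting_accseq by simp
    qed
  qed
qed


section \<open>Trees with few subtrees\<close>

lemma subtrees_sub: "subtrees (sub s v) \<subseteq> subtrees s"
  unfolding subtrees_def by auto

lemma sub_in_subtrees: "sub s v \<in> subtrees s"
  unfolding subtrees_def by auto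

lemma self_in_subtrees: "s \<in> subtrees s"
  using sub_in_subtrees[of s "[]"] by simp

lemma Reg_sub: "Reg K s \<Longrightarrow> Reg K (sub s v)"
  unfolding Reg_def using subtrees_sub[of s v]
  by (meson card_mono finite_subset le_trans)

lemma Reg_mono: "K \<le> K' \<Longrightarrow> Reg K s \<Longrightarrow> Reg K' s"
  unfolding Reg_def by auto

lemma not_Reg_sub: "\<not> Reg K (sub s v) \<Longrightarrow> \<not> Reg K s"
  using Reg_sub by blast

lemma Reg_agree:
  assumes "Reg K s" "Reg K s'" "\<forall>u. length u \<le> K * K \<longrightarrow> s u = s' u"
  shows "s = s'"
proof -
  have fin: "finite (subtrees s \<times> subtrees s')" "card (subtrees s \<times> subtrees s') \<le> K * K"
    using assms(1,2) unfolding Reg_def by (auto simp: card_cartesian_product mult_le_mono)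
  have "\<forall>u. length u = n \<longrightarrow> s u = s' u" for n
  proof (induction n rule: less_induct)
    case (less n)
    show ?case
    proof (intro allI impI)
      fix u :: "dir list" assume len: "length u = n"
      show "s u = s' u"
      proof (cases "n \<le> K * K")
        case True
        then show ?thesis using assms(3) len by auto
      next
        case False
        define f where "f i = (sub s (take i u), sub s' (take i u))" for i
        have "f ` {0..n} \<subseteq> subtrees s \<times> subtrees s'"
          unfolding f_def by (auto simp: sub_in_subtrees)
        moreover have "card {0..n} > card (subtrees s \<times> subtrees s')"
          using False fin by simp
        ultimately have "\<not> inj_on f {0..n}"
          using card_inj_on_le[of f "{0..n}" "subtrees s \<times> subtrees s'"] fin(1) by fastforce
        then obtain i j where ij: "i \<in> {0..n}" "j \<in> {0..n}" "i \<noteq> j" "f i = f j"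
          unfolding inj_on_def by blast
        obtain i' j' where i'j': "i' < j'" "j' \<le> n" "f i' = f j'"
          using ij by (metis atLeastAtMost_iff linorder_neqE_nat)
        define u' where "u' = take i' u @ drop j' u"
        have lu': "length u' < n" using i'j' len by (simp add: u'_def)
        have e1: "s u = s u'"
        proof -
          have "s u = sub s (take j' u) (drop j' u)" by (simp add: sub_def)
          also have "\<dots> = sub s (take i' u) (drop j' u)" using i'j'(3) by (simp add: f_def)
          finally show ?thesis by (simp add: sub_def u'_def)
        qed
        have e2: "s' u = s' u'"
        proof -
          have "s' u = sub s' (take j' u) (drop j' u)" by (simp add: sub_def)
          also have "\<dots> = sub s' (take i' u) (drop j' u)" using i'j'(3) by (simp add: f_def)
          finally show ?thesis by (simp add: sub_def u'_def)
        qed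
        have "s u' = s' u'" using less.IH[OF lu'] by blast
        then show ?thesis using e1 e2 by simp
      qed
    qed
  qed
  then show ?thesis by blast
qed

lemma finite_Reg: "finite {s :: ('a::finite) tree. Reg K s}"
proof -
  define U where "U = {xs :: dir list. set xs \<subseteq> UNIV \<and> length xs \<le> K * K}"
  define tr where "tr s = (\<lambda>u. if u \<in> U then s u else undefined)" for s :: "'a tree"
  have finU: "finite U" unfolding U_def by (rule finite_lists_length_le) simp
  have "inj_on tr {s. Reg K s}"
  proof (rule inj_onI)
    fix s s' assume "s \<in> {s. Reg K s}" "s' \<in> {s. Reg K s}" "tr s = tr s'"
    then show "s = s'"
      using Reg_agree[of K s s'] unfolding tr_def U_def by (auto simp: fun_eq_iff) (metis)
  qed
  moreover have "tr ` {s. Reg K s} \<subseteq> {f. \<forall>x. (x \<in> U \<longrightarrow> f x \<in> UNIV) \<and> (x \<notin> U \<longrightarrow> f x = undefined)}"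
    unfolding tr_def by auto
  moreover have "finite {f :: dir list \<Rightarrow> 'a. \<forall>x. (x \<in> U \<longrightarrow> f x \<in> UNIV) \<and> (x \<notin> U \<longrightarrow> f x = undefined)}"
    by (rule finite_set_of_finite_funs) (use finU in auto)
  ultimately show ?thesis
    by (meson finite_imageD finite_subset)
qed

lemma not_Reg_witness:
  assumes "\<not> Reg K s"
  shows "\<exists>D. \<forall>s'. (\<forall>u. length u < D \<longrightarrow> s' u = s u) \<longrightarrow> \<not> Reg K s'"
proof -
  obtain F where F: "F \<subseteq> subtrees s" "finite F" "card F = Suc K"
  proof (cases "finite (subtrees s)")
    case True
    then have "Suc K \<le> card (subtrees s)" using assms unfolding Reg_def by auto
    then show ?thesis using obtain_subset_with_card_n that by metis
  next
    case False
    then show ?thesis using infinite_arbitrarily_large that by metis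
  qed
  define pick where "pick x = (SOME v. sub s v = x)" for x
  have pick: "sub s (pick x) = x" if "x \<in> F" for x
    using F(1) that unfolding pick_def subtrees_def by (auto intro: someI)
  define V where "V = pick ` F"
  have injV: "inj_on (sub s) V" unfolding V_def inj_on_def using pick by auto
  have cardV: "card V = Suc K"
    unfolding V_def using F pick by (metis card_image inj_on_inverseI)
  have finV: "finite V" unfolding V_def using F(2) by simp
  define wit where "wit v v' = (SOME u. s (v @ u) \<noteq> s (v' @ u))" for v v'
  have wit: "s (v @ wit v v') \<noteq> s (v' @ wit v v')" if "v \<in> V" "v' \<in> V" "v \<noteq> v'" for v v'
  proof -
    have "sub s v \<noteq> sub s v'" using injV that unfolding inj_on_def by blast
    then have "\<exists>u. s (v @ u) \<noteq> s (v' @ u)" unfolding sub_def by (auto simp: fun_eq_iff)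
    then show ?thesis unfolding wit_def by (rule someI_ex)
  qed
  define D where "D = Suc (Max ((\<lambda>(v, v'). max (length v) (length v') + length (wit v v')) ` (V \<times> V)))"
  have bound: "max (length v) (length v') + length (wit v v') < D" if "v \<in> V" "v' \<in> V" for v v'
  proof -
    have "max (length v) (length v') + length (wit v v') \<in> (\<lambda>(v, v'). max (length v) (length v') + length (wit v v')) ` (V \<times> V)"
      using that by force
    then show ?thesis unfolding D_def using finV by (simp add: le_imp_less_Suc)
  qed
  show ?thesis
  proof (intro exI allI impI)
    fix s' :: "'a tree" assume agree: "\<forall>u. length u < D \<longrightarrow> s' u = s u"
    have "inj_on (sub s') V"
    proof (rule inj_onI, rule ccontr)
      fix v v' assume vv: "v \<in> V" "v' \<in> V" "sub s' v = sub s' v'" "v \<noteq> v'"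
      have "s' (v @ wit v v') = s (v @ wit v v')" "s' (v' @ wit v v') = s (v' @ wit v v')"
        using agree bound[OF vv(1,2)] by auto
      moreover have "s' (v @ wit v v') = s' (v' @ wit v v')" using vv(3) by (metis sub_app)
      ultimately show False using wit[OF vv(1,2,4)] by simp
    qed
    then have "card (sub s' ` V) = Suc K" using cardV by (simp add: card_image)
    moreover have "sub s' ` V \<subseteq> subtrees s'" unfolding subtrees_def by auto
    ultimately show "\<not> Reg K s'"
      unfolding Reg_def by (metis card_mono not_less_eq_eq)
  qed
qed


lemma antichain_single: "antichain {w}"
  unfolding antichain_def by auto

lemma singleton_Reg:
  assumes wf: "wf_pta A" and c: "comp_from A r t \<phi>" and a: "accepting A \<phi>"
    and r: "r \<in> states A" and uniq: "\<forall>s\<in>Lq A r. s = t"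
  shows "Reg (card (states A)) t"
proof -
  have eq: "sub t w = sub t w'" if "\<phi> w = \<phi> w'" for w w'
  proof -
    let ?s = "\<lambda>_. sub t w'" and ?\<psi> = "\<lambda>_. sub \<phi> w'"
    have "comp_from A r (graft {w} t ?s) (graft {w} \<phi> ?\<psi>) \<and> accepting A (graft {w} \<phi> ?\<psi>)"
    proof (rule graft_run[OF c a antichain_single])
      fix x assume "x \<in> {w}"
      then show "comp_from A (\<phi> x) (sub t w') (sub \<phi> w')" using comp_from_sub[OF c, of w'] that by simp
      show "accepting A (sub \<phi> w')" using accepting_sub[OF a] by blast
    qed
    then have "graft {w} t ?s \<in> Lq A r" unfolding Lq_def by blast
    then have "graft {w} t ?s = t" using uniq by blast
    then have "sub t w = sub (graft {w} t ?s) w" by simp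
    also have "\<dots> = sub t w'" using graft_in[OF antichain_single, where t=t and s="?s" ] by (simp add: sub_def fun_eq_iff)
    finally show ?thesis .
  qed
  define f where "f q = sub t (SOME w. \<phi> w = q)" for q
  have "subtrees t \<subseteq> f ` states A"
  proof
    fix x assume "x \<in> subtrees t"
    then obtain w where w: "x = sub t w" unfolding subtrees_def by blast
    have "\<phi> (SOME w'. \<phi> w' = \<phi> w) = \<phi> w" by (rule someI) simp
    then have "sub t (SOME w'. \<phi> w' = \<phi> w) = sub t w" by (rule eq)
    then have "x = f (\<phi> w)" unfolding f_def using w by simp
    moreover have "\<phi> w \<in> states A" using comp_states[OF wf c r] .
    ultimately show "x \<in> f ` states A" by blast
  qed
  moreover have "finite (states A)" using wf unfolding wf_pta_def by blast
  ultimately have "finite (subtrees t)" "card (subtrees t) \<le> card (f ` states A)"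
    by (auto intro: finite_subset card_mono)
  moreover have "card (f ` states A) \<le> card (states A)"
    by (rule card_image_le) (use \<open>finite (states A)\<close> in simp)
  ultimately show ?thesis unfolding Reg_def by simp
qed

lemma uncountable_nat_bool: "uncountable (UNIV :: (nat \<Rightarrow> bool) set)"
proof
  assume "countable (UNIV :: (nat \<Rightarrow> bool) set)"
  then obtain g :: "(nat \<Rightarrow> bool) \<Rightarrow> nat" where g: "inj g" by (auto simp: countable_def)
  define f where "f n = {m. inv g n m}" for n
  have "f ` UNIV = Pow UNIV"
  proof -
    have "X \<in> f ` UNIV" for X :: "nat set"
    proof -
      have "inv g (g (\<lambda>m. m \<in> X)) = (\<lambda>m. m \<in> X)" using g by simp
      then have "f (g (\<lambda>m. m \<in> X)) = X" unfolding f_def by simp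
      then show ?thesis by (intro image_eqI[where x="g (\<lambda>m. m \<in> X)"]) auto
    qed
    then show ?thesis by auto
  qed
  then show False using Cantors_theorem by blast
qed

lemma uncountable_inj_image:
  assumes "inj (F :: (nat \<Rightarrow> bool) \<Rightarrow> 'b)" "range F \<subseteq> S"
  shows "uncountable S"
proof
  assume "countable S"
  then have "countable (range F)" using assms(2) countable_subset by blast
  then have "countable (UNIV :: (nat \<Rightarrow> bool) set)"
    using countable_image_inj_on[of F UNIV] assms(1) by simp
  then show False using uncountable_nat_bool by blast
qed

lemma antichain_uncountable:
  assumes c: "comp_from A r t \<phi>" and a: "accepting A \<phi>"
    and injW: "inj (W :: nat \<Rightarrow> dir list)" and acW: "antichain (range W)"
    and alt: "\<And>n. \<exists>s'. s' \<in> Lq A (\<phi> (W n)) \<and> s' \<noteq> sub t (W n)"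
  shows "uncountable (Lq A r)"
proof -
  have ex: "\<forall>n. \<exists>p. comp_from A (\<phi> (W n)) (fst p) (snd p) \<and> accepting A (snd p) \<and> fst p \<noteq> sub t (W n)"
    using alt unfolding Lq_def by fastforce
  obtain P where P: "\<forall>n. comp_from A (\<phi> (W n)) (fst (P n)) (snd (P n)) \<and> accepting A (snd (P n)) \<and> fst (P n) \<noteq> sub t (W n)"
    using choice[OF ex] by blast
  define alt where "alt n = fst (P n)" for n
  define altr where "altr n = snd (P n)" for n
  have altr: "\<And>n. comp_from A (\<phi> (W n)) (alt n) (altr n)" "\<And>n. accepting A (altr n)"
    "\<And>n. alt n \<noteq> sub t (W n)"
    using P unfolding alt_def altr_def by auto
  define WS where "WS \<sigma> = W ` {n. \<sigma> n}" for \<sigma> :: "nat \<Rightarrow> bool"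
  define F where "F \<sigma> = graft (WS \<sigma>) t (\<lambda>w. alt (inv W w))" for \<sigma>
  have acS: "antichain (WS \<sigma>)" for \<sigma> using acW unfolding WS_def antichain_def by auto
  have inF: "F \<sigma> \<in> Lq A r" for \<sigma>
  proof -
    have "comp_from A r (F \<sigma>) (graft (WS \<sigma>) \<phi> (\<lambda>w. altr (inv W w))) \<and> accepting A (graft (WS \<sigma>) \<phi> (\<lambda>w. altr (inv W w)))"
      unfolding F_def
    proof (rule graft_run[OF c a acS])
      fix w assume "w \<in> WS \<sigma>"
      then obtain n where "w = W n" unfolding WS_def by blast
      then show "comp_from A (\<phi> w) (alt (inv W w)) (altr (inv W w))" "accepting A (altr (inv W w))"
        using altr injW by auto
    qed
    then show ?thesis unfolding Lq_def by blast
  qed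
  have subF: "sub (F \<sigma>) (W n) = (if \<sigma> n then alt n else sub t (W n))" for \<sigma> n
  proof (cases "\<sigma> n")
    case True
    then have "W n \<in> WS \<sigma>" unfolding WS_def by blast
    have "graft (WS \<sigma>) t (\<lambda>w. alt (inv W w)) (W n @ x) = alt n x" for x
      using graft_in[OF acS \<open>W n \<in> WS \<sigma>\<close>, of t "\<lambda>w. alt (inv W w)" x] injW by simp
    then show ?thesis using True by (simp add: F_def sub_def fun_eq_iff)
  next
    case False
    have "\<not> (\<exists>w\<in>WS \<sigma>. prefix w (W n @ z))" for z
    proof
      assume "\<exists>w\<in>WS \<sigma>. prefix w (W n @ z)"
      then obtain m where m: "\<sigma> m" "prefix (W m) (W n @ z)" unfolding WS_def by blast
      have "prefix (W m) (W n) \<or> prefix (W n) (W m)"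
        using m(2) prefix_same_cases[of "W m" "W n @ z" "W n"] by simp
      moreover have ac': "\<And>x y. prefix (W x) (W y) \<Longrightarrow> W x = W y"
        using acW unfolding antichain_def by simp
      ultimately have "W m = W n" by (metis ac')
      then have "m = n" using injW by (simp add: inj_eq)
      then show False using m(1) False by simp
    qed
    then show ?thesis using False by (simp add: F_def sub_def fun_eq_iff graft_out)
  qed
  have "inj F"
  proof (rule injI, rule ccontr)
    fix \<sigma> \<tau> assume eq: "F \<sigma> = F \<tau>" and ne: "\<sigma> \<noteq> \<tau>"
    then obtain n where n: "\<sigma> n \<noteq> \<tau> n" by (auto simp: fun_eq_iff)
    have "sub (F \<sigma>) (W n) = sub (F \<tau>) (W n)" using eq by simp
    then show False using n subF[of \<sigma> n] subF[of \<tau> n] altr(3)[of n] by (cases "\<sigma> n") auto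
  qed
  then show ?thesis using uncountable_inj_image[of F "Lq A r"] inF by blast
qed


section \<open>Branches, letters and periodicity\<close>

definition off :: "(nat \<Rightarrow> dir) \<Rightarrow> nat \<Rightarrow> dir list" where
  "off b m = node b m @ [flip (b m)]"

definition letter :: "'a tree \<Rightarrow> (nat \<Rightarrow> dir) \<Rightarrow> nat \<Rightarrow> 'a \<times> dir \<times> 'a tree" where
  "letter t b m = (t (node b m), b m, sub t (off b m))"

lemma flip_neq2[simp]: "d \<noteq> flip d"
  by (cases d) auto

lemma length_off[simp]: "length (off b m) = Suc m"
  by (simp add: off_def)

lemma decomp:
  "node b a @ u = node b (a + length u) \<or> (\<exists>k<length u. \<exists>rest. node b a @ u = off b (a + k) @ rest)"
proof (induction u arbitrary: a)
  case Nil
  then show ?case by simp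
next
  case (Cons d u)
  show ?case
  proof (cases "d = b a")
    case True
    then have e: "node b a @ d # u = node b (Suc a) @ u" by (simp add: node_Suc)
    from Cons.IH[of "Suc a"] show ?thesis
    proof
      assume "node b (Suc a) @ u = node b (Suc a + length u)"
      then show ?thesis using e by simp
    next
      assume "\<exists>k<length u. \<exists>rest. node b (Suc a) @ u = off b (Suc a + k) @ rest"
      then obtain k rest where "k < length u" "node b (Suc a) @ u = off b (Suc a + k) @ rest" by blast
      then show ?thesis using e by (intro disjI2 exI[of _ "Suc k"]) auto
    qed
  next
    case False
    then have "d = flip (b a)" by (cases d; cases "b a") auto
    then have "0 < length (d # u) \<and> node b a @ d # u = off b (a + 0) @ u" by (simp add: off_def)
    then show ?thesis by blast
  qed
qed

lemma decomp0:
  "u = node b (length u) \<or> (\<exists>k<length u. \<exists>rest. u = off b k @ rest)"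
  using decomp[of b 0 u] by simp

lemma off_antichain: "antichain (range (off b))"
  unfolding antichain_def
proof (intro ballI impI)
  fix w w' assume "w \<in> range (off b)" "w' \<in> range (off b)" "prefix w w'"
  then obtain m m' where mm: "w = off b m" "w' = off b m'" by blast
  have "m = m'"
  proof (rule ccontr)
    assume "m \<noteq> m'"
    have "length w \<le> length w'" using \<open>prefix w w'\<close> by (rule prefix_length_le)
    then have "m < m'" using mm \<open>m \<noteq> m'\<close> by simp
    have "take (Suc m) w' = w" using \<open>prefix w w'\<close> mm by (metis prefix_def append_take_drop_id length_off append_eq_conv_conj)
    moreover have "take (Suc m) w' = node b (Suc m)"
      using \<open>m < m'\<close> mm(2) by (simp add: off_def take_node)
    ultimately show False using mm(1) by (simp add: off_def node_Suc)
  qed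
  then show "w = w'" using mm by simp
qed

lemma inj_off: "inj (off b)"
  by (rule injI) (metis length_off nat.inject)

lemma letter_sub_node:
  assumes "\<forall>k. letter t b (a + k) = letter t b (a + l + k)"
  shows "sub t (node b (a + k)) = sub t (node b (a + l + k))"
proof -
  have "\<forall>k. t (node b (a + k) @ u) = t (node b (a + l + k) @ u)" for u
  proof (induction u)
    case Nil
    then show ?case using assms by (simp add: letter_def)
  next
    case (Cons d u)
    show ?case
    proof
      fix k
      have L: "t (node b (a + k)) = t (node b (a + l + k))" "b (a + k) = b (a + l + k)"
        "sub t (off b (a + k)) = sub t (off b (a + l + k))"
        using assms[rule_format, of k] by (auto simp: letter_def)
      show "t (node b (a + k) @ d # u) = t (node b (a + l + k) @ d # u)"
      proof (cases "d = b (a + k)")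
        case True
        have e1: "node b (a + k) @ d # u = node b (a + Suc k) @ u"
          using True by (simp add: node_Suc)
        have e2: "node b (a + l + k) @ d # u = node b (a + l + Suc k) @ u"
          using True L(2) by (simp add: node_Suc)
        show ?thesis unfolding e1 e2 by (rule Cons.IH[rule_format])
      next
        case False
        then have "d = flip (b (a + k))" by (cases d; cases "b (a + k)") auto
        then have "node b (a + k) @ d # u = off b (a + k) @ u"
          "node b (a + l + k) @ d # u = off b (a + l + k) @ u"
          using L(2) by (simp_all add: off_def)
        then show ?thesis using L(3) by (metis sub_app)
      qed
    qed
  qed
  then show ?thesis by (auto simp: sub_def fun_eq_iff)
qed

lemma letter_mod:
  assumes "\<forall>k. letter t b (a + k) = letter t b (a + l + k)"
  shows "letter t b (a + (k mod l + l * i)) = letter t b (a + k mod l)"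
proof (induction i)
  case 0
  then show ?case by simp
next
  case (Suc i)
  have "letter t b (a + (k mod l + l * Suc i)) = letter t b (a + l + (k mod l + l * i))"
    by (simp add: algebra_simps)
  also have "\<dots> = letter t b (a + (k mod l + l * i))" using assms by metis
  finally show ?case using Suc by simp
qed

lemma sub_mod:
  assumes "\<forall>k. letter t b (a + k) = letter t b (a + l + k)"
  shows "sub t (node b (a + (k mod l + l * i))) = sub t (node b (a + k mod l))"
proof (induction i)
  case 0
  then show ?case by simp
next
  case (Suc i)
  have "sub t (node b (a + (k mod l + l * Suc i))) = sub t (node b (a + l + (k mod l + l * i)))"
    by (simp add: algebra_simps)
  also have "\<dots> = sub t (node b (a + (k mod l + l * i)))" using letter_sub_node[OF assms] by metis
  finally show ?case using Suc by simp
qed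

lemma periodic_Reg:
  assumes per: "\<forall>k. letter t b (a + k) = letter t b (a + l + k)" and l: "0 < l"
    and offR: "\<forall>k<l. Reg K0 (sub t (off b (a + k)))"
  shows "Reg (l + l * K0) (sub t (node b a))"
proof -
  let ?S1 = "(\<lambda>k. sub t (node b (a + k))) ` {..<l}"
  let ?S2 = "\<Union>k\<in>{..<l}. subtrees (sub t (off b (a + k)))"
  have modk: "a + k = a + (k mod l + l * (k div l))" for k by simp
  have sub_eq: "sub t (node b (a + k)) = sub t (node b (a + k mod l))" for k
    using sub_mod[OF per, of k "k div l"] modk[of k] by metis
  have off_eq: "sub t (off b (a + k)) = sub t (off b (a + k mod l))" for k
    using letter_mod[OF per, of k "k div l"] modk[of k] by (metis letter_def prod.inject)
  have "subtrees (sub t (node b a)) \<subseteq> ?S1 \<union> ?S2"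
  proof
    fix x assume "x \<in> subtrees (sub t (node b a))"
    then obtain u where x: "x = sub t (node b a @ u)" unfolding subtrees_def by auto
    from decomp[of b a u] show "x \<in> ?S1 \<union> ?S2"
    proof
      assume "node b a @ u = node b (a + length u)"
      then have "x = sub t (node b (a + length u mod l))" using x sub_eq by simp
      then show ?thesis using l by auto
    next
      assume "\<exists>k<length u. \<exists>rest. node b a @ u = off b (a + k) @ rest"
      then obtain k rest where kr: "node b a @ u = off b (a + k) @ rest" by blast
      have "x = sub (sub t (off b (a + k))) rest" using x kr by simp
      then have "x = sub (sub t (off b (a + k mod l))) rest" using off_eq by simp
      then have "x \<in> subtrees (sub t (off b (a + k mod l)))" using sub_in_subtrees by metis
      then show ?thesis using l by auto
    qed
  qed
  moreover have "finite ?S1" by simp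
  moreover have "card ?S1 \<le> l" using card_image_le[of "{..<l}"] by simp
  moreover have "finite ?S2" using offR unfolding Reg_def by auto
  moreover have "card ?S2 \<le> l * K0"
  proof -
    have "card ?S2 \<le> (\<Sum>k\<in>{..<l}. card (subtrees (sub t (off b (a + k)))))"
      by (rule card_UN_le) simp
    also have "\<dots> \<le> (\<Sum>k\<in>{..<l}. K0)"
      by (rule sum_mono) (use offR in \<open>auto simp: Reg_def\<close>)
    finally show ?thesis by simp
  qed
  ultimately show ?thesis
    unfolding Reg_def
    by (meson add_le_mono card_Un_le finite_UnI finite_subset card_mono le_trans)
qed


section \<open>Pumped trees along a branch\<close>

fun gg :: "(nat \<Rightarrow> dir) \<Rightarrow> (nat \<Rightarrow> nat) \<Rightarrow> nat \<Rightarrow> dir list \<Rightarrow> dir list" where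
  "gg b h j [] = node b (h j)"
| "gg b h j (d # u) = (if d = b (h j) then gg b h (Suc j) u else node b (h j) @ d # u)"

lemma gg_node: "gg b h j (node (\<lambda>i. b (h (j + i))) k @ u) = gg b h (j + k) u"
proof (induction k arbitrary: j)
  case 0
  then show ?case by simp
next
  case (Suc k)
  have "node (\<lambda>i. b (h (j + i))) (Suc k) = b (h j) # node (\<lambda>i. b (h (Suc j + i))) k"
    by (simp add: node_Suc')
  then show ?case using Suc.IH[of "Suc j"] by simp
qed

lemma gg_node0: "gg b h 0 (node (\<lambda>i. b (h i)) k @ u) = gg b h k u"
  using gg_node[of b h 0 k u] by simp

lemma gg_straight:
  assumes "\<forall>k\<le>length u. h (j + k) = h j + k"
  shows "gg b h j u = node b (h j) @ u"
  using assms
proof (induction u arbitrary: j)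
  case Nil
  then show ?case by simp
next
  case (Cons d u)
  show ?case
  proof (cases "d = b (h j)")
    case True
    have "\<forall>k\<le>length u. h (Suc j + k) = h (Suc j) + k"
    proof (intro allI impI)
      fix k assume "k \<le> length u"
      then have "h (j + Suc k) = h j + Suc k" "h (j + 1) = h j + 1" using Cons.prems by auto
      then show "h (Suc j + k) = h (Suc j) + k" by simp
    qed
    then have "gg b h (Suc j) u = node b (h (Suc j)) @ u" by (rule Cons.IH)
    moreover have "h (Suc j) = Suc (h j)" using Cons.prems[rule_format, of 1] by simp
    ultimately show ?thesis using True by (simp add: node_Suc)
  next
    case False
    then show ?thesis by simp
  qed
qed

lemma decomp_branch:
  "v = node \<beta> (length v) \<or> (\<exists>k rest d. v = node \<beta> k @ d # rest \<and> d \<noteq> \<beta> k)"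
  using decomp0[of v \<beta>] unfolding off_def by (metis append.assoc append_Cons append_Nil flip_neq2)

lemma pumped_comp:
  assumes c: "comp_from A r t \<phi>" and h0: "h 0 = 0"
    and hs: "\<And>i. \<phi> (node b (h (Suc i))) = \<phi> (node b (Suc (h i)))"
  shows "comp_from A r (\<lambda>v. t (gg b h 0 v)) (\<lambda>v. \<phi> (gg b h 0 v))"
  unfolding comp_from_def
proof (intro conjI allI)
  show "\<phi> (gg b h 0 []) = r" using c h0 by (simp add: comp_from_def)
  fix v
  let ?\<beta> = "\<lambda>i. b (h i)"
  have key: "\<phi> (gg b h 0 (v @ [d])) = \<phi> (gg b h 0 v @ [d])" for d
  proof -
    from decomp_branch[of v ?\<beta>] show ?thesis
    proof
      assume v: "v = node ?\<beta> (length v)"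
      let ?j = "length v"
      have g1: "gg b h 0 v = node b (h ?j)" using gg_node0[of b h ?j "[]"] v by simp
      have g2: "gg b h 0 (v @ [d]) = gg b h ?j [d]" using gg_node0[of b h ?j "[d]"] v by simp
      show ?thesis
      proof (cases "d = b (h ?j)")
        case True
        then have "gg b h ?j [d] = node b (h (Suc ?j))" by simp
        then show ?thesis using g1 g2 hs[of ?j] True by (simp add: node_Suc)
      next
        case False
        then show ?thesis using g1 g2 by simp
      qed
    next
      assume "\<exists>k rest d'. v = node ?\<beta> k @ d' # rest \<and> d' \<noteq> ?\<beta> k"
      then obtain k rest d' where v: "v = node ?\<beta> k @ d' # rest" "d' \<noteq> ?\<beta> k" by blast
      have "gg b h 0 v = node b (h k) @ d' # rest" using gg_node0[of b h k "d' # rest"] v by simp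
      moreover have "gg b h 0 (v @ [d]) = node b (h k) @ d' # rest @ [d]"
        using gg_node0[of b h k "d' # rest @ [d]"] v by simp
      ultimately show ?thesis by simp
    qed
  qed
  have "(\<phi> (gg b h 0 v), t (gg b h 0 v), \<phi> (gg b h 0 v @ [Lft]), \<phi> (gg b h 0 v @ [Rgt])) \<in> trans A"
    using c by (simp add: comp_from_def)
  then show "(\<phi> (gg b h 0 v), t (gg b h 0 v), \<phi> (gg b h 0 (v @ [Lft])), \<phi> (gg b h 0 (v @ [Rgt]))) \<in> trans A"
    using key by simp
qed

lemma pumped_acc:
  assumes a: "accepting A \<phi>"
    and sp: "accseq (\<lambda>i. color A (\<phi> (node b (h i))))"
  shows "accepting A (\<lambda>v. \<phi> (gg b h 0 v))"
  unfolding accepting_accseq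
proof
  fix \<beta>'
  let ?\<beta> = "\<lambda>i. b (h i)"
  show "accseq (\<lambda>n. color A (\<phi> (gg b h 0 (node \<beta>' n))))"
  proof (cases "\<forall>i. \<beta>' i = ?\<beta> i")
    case True
    then have "\<beta>' = ?\<beta>" by auto
    then have "gg b h 0 (node \<beta>' n) = node b (h n)" for n using gg_node0[of b h n "[]"] by simp
    then show ?thesis using sp by simp
  next
    case False
    define k where "k = (LEAST k. \<beta>' k \<noteq> ?\<beta> k)"
    have k: "\<beta>' k \<noteq> ?\<beta> k" using False unfolding k_def by (metis (mono_tags, lifting) LeastI)
    have kb: "\<forall>i<k. \<beta>' i = ?\<beta> i" unfolding k_def using not_less_Least by blast
    have nk: "node \<beta>' k = node ?\<beta> k" using kb unfolding node_def by simp
    define ob where "ob = through (node b (h k) @ [\<beta>' k]) (\<lambda>i. \<beta>' (Suc k + i))"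
    have eqn: "gg b h 0 (node \<beta>' (m + Suc k)) = node ob (m + Suc (h k))" for m
    proof -
      have "node \<beta>' (m + Suc k) = node \<beta>' (Suc k + m)" by (simp add: add.commute)
      also have "\<dots> = node \<beta>' k @ \<beta>' k # node (\<lambda>i. \<beta>' (Suc k + i)) m"
        using node_add[of \<beta>' "Suc k" m] by (simp add: node_Suc)
      finally have "gg b h 0 (node \<beta>' (m + Suc k)) = gg b h k (\<beta>' k # node (\<lambda>i. \<beta>' (Suc k + i)) m)"
        using nk gg_node0 by metis
      also have "\<dots> = node b (h k) @ \<beta>' k # node (\<lambda>i. \<beta>' (Suc k + i)) m" using k by simp
      also have "\<dots> = node ob (length (node b (h k) @ [\<beta>' k]) + m)"
        unfolding ob_def node_through by simp
      finally show ?thesis by (simp add: add.commute)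
    qed
    have "accseq (\<lambda>n. color A (\<phi> (node ob n)))" using a unfolding accepting_accseq by blast
    moreover have "\<forall>m\<ge>0. color A (\<phi> (gg b h 0 (node \<beta>' (m + Suc k)))) = color A (\<phi> (node ob (m + Suc (h k))))"
      using eqn by simp
    ultimately show ?thesis
      using accseq_shift_eq[of 0 "\<lambda>n. color A (\<phi> (gg b h 0 (node \<beta>' n)))" "Suc k" "\<lambda>n. color A (\<phi> (node ob n))" "Suc (h k)"]
      by simp
  qed
qed


locale pumpctx =
  fixes A :: "'a pta" and t :: "'a tree" and \<phi> :: "dir list \<Rightarrow> nat" and r :: nat
    and b :: "nat \<Rightarrow> dir" and la lb le Dp :: "nat \<Rightarrow> nat" and K0 N c :: nat
  assumes wf: "wf_pta A" and cmp: "comp_from A r t \<phi>" and acc: "accepting A \<phi>"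
    and rin: "r \<in> states A"
    and lalb: "\<And>n. la n < lb n"
    and spacing: "\<And>n. lb n + le n + Dp (lb n) < la (Suc n)"
    and steq: "\<And>n. \<phi> (node b (la n)) = \<phi> (node b (lb n))"
    and ediff: "\<And>n. letter t b (la n + le n) \<noteq> letter t b (lb n + le n)"
    and esame: "\<And>n k. k < le n \<Longrightarrow> letter t b (la n + k) = letter t b (lb n + k)"
    and offReg: "\<And>m. la 0 \<le> m \<Longrightarrow> Reg K0 (sub t (off b m))"
    and spNon: "\<And>n s'. (\<forall>u. length u < Dp (lb n) \<longrightarrow> s' u = sub t (node b (lb n)) u) \<Longrightarrow> \<not> Reg K0 s'"
    and Nle: "N \<le> la 0"
    and colle: "\<And>m. N \<le> m \<Longrightarrow> color A (\<phi> (node b m)) \<le> c"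
    and colinf: "\<exists>\<^sub>\<infinity>m. color A (\<phi> (node b m)) = c"
    and ceven: "even c"
begin

lemma lb_la_Suc: "lb n < la (Suc n)" using spacing[of n] by simp

lemma lb_Suc: "lb n < lb (Suc n)" using lb_la_Suc[of n] lalb[of "Suc n"] by simp

lemma lb_mono: "n < m \<Longrightarrow> lb n < lb m"
  using lb_Suc by (metis lift_Suc_mono_less)

lemma lb_mono_le: "n \<le> m \<Longrightarrow> lb n \<le> lb m"
  using lb_mono by (metis le_eq_less_or_eq)

lemma la_Suc: "la n < la (Suc n)" using lb_la_Suc[of n] lalb[of n] by simp

lemma la_mono_le: "n \<le> m \<Longrightarrow> la n \<le> la m"
  using la_Suc by (metis lift_Suc_mono_less le_eq_less_or_eq)

lemma lb_ge: "n \<le> lb n"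
proof (induction n)
  case 0 then show ?case by simp
next
  case (Suc n) then show ?case using lb_Suc[of n] by simp
qed

definition ins :: "(nat \<Rightarrow> bool) \<Rightarrow> nat \<Rightarrow> nat" where
  "ins \<sigma> n = (\<Sum>k<n. if \<sigma> k then lb k - la k else 0)"

definition pe :: "nat \<Rightarrow> nat" where
  "pe n = (case n of 0 \<Rightarrow> 0 | Suc m \<Rightarrow> lb m)"

definition R :: "(nat \<Rightarrow> bool) \<Rightarrow> nat \<Rightarrow> nat" where
  "R \<sigma> n = pe n + ins \<sigma> n"

definition region :: "(nat \<Rightarrow> bool) \<Rightarrow> nat \<Rightarrow> nat" where
  "region \<sigma> i = (LEAST n. i < R \<sigma> (Suc n))"

definition h :: "(nat \<Rightarrow> bool) \<Rightarrow> nat \<Rightarrow> nat" where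
  "h \<sigma> i = (let n = region \<sigma> i; q = i - ins \<sigma> n in if q < lb n then q else la n + (q - lb n))"

lemma ins_0[simp]: "ins \<sigma> 0 = 0" by (simp add: ins_def)

lemma ins_Suc: "ins \<sigma> (Suc n) = ins \<sigma> n + (if \<sigma> n then lb n - la n else 0)"
  by (simp add: ins_def)

lemma ins_mono: "n \<le> m \<Longrightarrow> ins \<sigma> n \<le> ins \<sigma> m"
  unfolding ins_def by (rule sum_mono2) auto

lemma pe_0[simp]: "pe 0 = 0" and pe_Suc[simp]: "pe (Suc n) = lb n"
  by (simp_all add: pe_def)

lemma pe_lt: "pe n < lb n"
  using lalb[of 0] lb_Suc by (cases n) auto

lemma pe_le_la: "pe n \<le> la n"
  using lb_la_Suc by (cases n) (auto simp: less_imp_le)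

lemma pe_mono: "n \<le> m \<Longrightarrow> pe n \<le> pe m"
  by (cases n; cases m) (auto simp: lb_mono_le)

lemma R_Suc: "R \<sigma> (Suc n) = lb n + ins \<sigma> (Suc n)"
  by (simp add: R_def)

lemma R_less_Suc: "R \<sigma> n < R \<sigma> (Suc n)"
  unfolding R_def using pe_lt[of n] ins_mono[of n "Suc n" \<sigma>] by simp

lemma R_mono_less: "n < m \<Longrightarrow> R \<sigma> n < R \<sigma> m"
  using R_less_Suc by (metis lift_Suc_mono_less)

lemma R_mono: "n \<le> m \<Longrightarrow> R \<sigma> n \<le> R \<sigma> m"
  using R_mono_less by (metis le_eq_less_or_eq)

lemma R_ge: "n \<le> R \<sigma> n"
proof (induction n)
  case 0 then show ?case by simp
next
  case (Suc n) then show ?case using R_less_Suc[of \<sigma> n] by simp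
qed

lemma region_props: "R \<sigma> (region \<sigma> i) \<le> i \<and> i < R \<sigma> (Suc (region \<sigma> i))"
proof -
  have ex: "i < R \<sigma> (Suc i)" using R_ge[of "Suc i" \<sigma>] by simp
  have 1: "i < R \<sigma> (Suc (region \<sigma> i))" unfolding region_def by (rule LeastI[of _ i]) (rule ex)
  have 2: "R \<sigma> (region \<sigma> i) \<le> i"
  proof (cases "region \<sigma> i")
    case 0 then show ?thesis by (simp add: R_def)
  next
    case (Suc m)
    have "\<not> i < R \<sigma> (Suc m)"
    proof
      assume "i < R \<sigma> (Suc m)"
      then have "region \<sigma> i \<le> m" unfolding region_def by (rule Least_le)
      then show False using Suc by simp
    qed
    then show ?thesis using Suc by simp
  qed
  show ?thesis using 1 2 by simp
qed

lemma region_unique: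
  assumes "R \<sigma> n \<le> i" "i < R \<sigma> (Suc n)"
  shows "region \<sigma> i = n"
proof -
  have rp: "R \<sigma> (region \<sigma> i) \<le> i" "i < R \<sigma> (Suc (region \<sigma> i))" using region_props by auto
  show ?thesis
  proof (rule ccontr)
    assume "region \<sigma> i \<noteq> n"
    then have "region \<sigma> i < n \<or> n < region \<sigma> i" by arith
    then show False
    proof
      assume "region \<sigma> i < n"
      then have "R \<sigma> (Suc (region \<sigma> i)) \<le> R \<sigma> n" by (intro R_mono) simp
      then show False using rp assms by simp
    next
      assume "n < region \<sigma> i"
      then have "R \<sigma> (Suc n) \<le> R \<sigma> (region \<sigma> i)" by (intro R_mono) simp
      then show False using rp assms by simp
    qed
  qed
qed

lemma h_first:
  assumes "pe n \<le> p" "p < lb n"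
  shows "h \<sigma> (p + ins \<sigma> n) = p"
proof -
  have "R \<sigma> n \<le> p + ins \<sigma> n" using assms by (simp add: R_def)
  moreover have "p + ins \<sigma> n < R \<sigma> (Suc n)"
    using assms ins_mono[of n "Suc n" \<sigma>] by (simp add: R_Suc)
  ultimately have "region \<sigma> (p + ins \<sigma> n) = n" by (rule region_unique)
  then show ?thesis using assms by (simp add: h_def Let_def)
qed

lemma h_second:
  assumes "\<sigma> n" "k < lb n - la n"
  shows "h \<sigma> (lb n + ins \<sigma> n + k) = la n + k"
proof -
  have "R \<sigma> n \<le> lb n + ins \<sigma> n + k" using pe_lt[of n] by (simp add: R_def)
  moreover have "lb n + ins \<sigma> n + k < R \<sigma> (Suc n)"
    using assms by (simp add: R_Suc ins_Suc)
  ultimately have "region \<sigma> (lb n + ins \<sigma> n + k) = n" by (rule region_unique)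
  then show ?thesis by (simp add: h_def Let_def)
qed

lemma h_cases:
  "\<exists>n. (\<exists>p. pe n \<le> p \<and> p < lb n \<and> i = p + ins \<sigma> n) \<or>
       (\<sigma> n \<and> (\<exists>k < lb n - la n. i = lb n + ins \<sigma> n + k))"
proof -
  let ?n = "region \<sigma> i"
  have rp: "R \<sigma> ?n \<le> i" "i < R \<sigma> (Suc ?n)" using region_props by auto
  let ?q = "i - ins \<sigma> ?n"
  have q1: "pe ?n \<le> ?q" "i = ?q + ins \<sigma> ?n" using rp(1) by (auto simp: R_def)
  show ?thesis
  proof (cases "?q < lb ?n")
    case True
    then show ?thesis using q1 by blast
  next
    case False
    have "\<sigma> ?n"
    proof (rule ccontr)
      assume "\<not> \<sigma> ?n"
      then have "R \<sigma> (Suc ?n) = lb ?n + ins \<sigma> ?n" by (simp add: R_Suc ins_Suc)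
      then show False using rp(2) False q1(2) by linarith
    qed
    moreover have "?q - lb ?n < lb ?n - la ?n" "i = lb ?n + ins \<sigma> ?n + (?q - lb ?n)"
      using rp(2) False q1(2) \<open>\<sigma> ?n\<close> by (auto simp: R_Suc ins_Suc)
    ultimately show ?thesis by blast
  qed
qed

lemma h0: "h \<sigma> 0 = 0"
  using h_first[of 0 0 \<sigma>] pe_lt[of 0] by simp

lemma h_le: "h \<sigma> i \<le> i"
proof -
  from h_cases[of i \<sigma>] obtain n where
    "(\<exists>p. pe n \<le> p \<and> p < lb n \<and> i = p + ins \<sigma> n) \<or> (\<sigma> n \<and> (\<exists>k < lb n - la n. i = lb n + ins \<sigma> n + k))"
    by blast
  then show ?thesis
  proof
    assume "\<exists>p. pe n \<le> p \<and> p < lb n \<and> i = p + ins \<sigma> n"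
    then obtain p where p: "pe n \<le> p" "p < lb n" "i = p + ins \<sigma> n" by blast
    show ?thesis using h_first[OF p(1,2), of \<sigma>] p(3) by simp
  next
    assume "\<sigma> n \<and> (\<exists>k < lb n - la n. i = lb n + ins \<sigma> n + k)"
    then obtain k where k: "\<sigma> n" "k < lb n - la n" "i = lb n + ins \<sigma> n + k" by blast
    show ?thesis using h_second[of \<sigma> n k] k lalb[of n] by simp
  qed
qed

lemma h_step:
  "h \<sigma> (Suc i) = Suc (h \<sigma> i) \<or> (\<exists>n. \<sigma> n \<and> Suc (h \<sigma> i) = lb n \<and> h \<sigma> (Suc i) = la n)"
proof -
  from h_cases[of i \<sigma>] obtain n where
    "(\<exists>p. pe n \<le> p \<and> p < lb n \<and> i = p + ins \<sigma> n) \<or> (\<sigma> n \<and> (\<exists>k < lb n - la n. i = lb n + ins \<sigma> n + k))"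
    by blast
  then show ?thesis
  proof
    assume "\<exists>p. pe n \<le> p \<and> p < lb n \<and> i = p + ins \<sigma> n"
    then obtain p where p: "pe n \<le> p" "p < lb n" "i = p + ins \<sigma> n" by blast
    have hi: "h \<sigma> i = p" using h_first[OF p(1,2)] p(3) by simp
    show ?thesis
    proof (cases "Suc p < lb n")
      case True
      then have "h \<sigma> (Suc p + ins \<sigma> n) = Suc p" using p(1) by (intro h_first) auto
      then show ?thesis using hi p(3) by simp
    next
      case False
      then have sp: "Suc p = lb n" using p(2) by simp
      show ?thesis
      proof (cases "\<sigma> n")
        case True
        have "h \<sigma> (lb n + ins \<sigma> n + 0) = la n + 0" using h_second[of \<sigma> n 0] True lalb[of n] by simp
        moreover have "Suc i = lb n + ins \<sigma> n + 0" using sp p(3) by simp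
        ultimately show ?thesis using True sp hi by (intro disjI2 exI[of _ n]) simp
      next
        case False
        have "h \<sigma> (lb n + ins \<sigma> (Suc n)) = lb n"
          using h_first[of "Suc n" "lb n" \<sigma>] lb_Suc[of n] by simp
        moreover have "Suc i = lb n + ins \<sigma> (Suc n)" using sp p(3) False by (simp add: ins_Suc)
        ultimately show ?thesis using sp hi by simp
      qed
    qed
  next
    assume "\<sigma> n \<and> (\<exists>k < lb n - la n. i = lb n + ins \<sigma> n + k)"
    then obtain k where k: "\<sigma> n" "k < lb n - la n" "i = lb n + ins \<sigma> n + k" by blast
    have hi: "h \<sigma> i = la n + k" using h_second[of \<sigma> n k] k by simp
    show ?thesis
    proof (cases "Suc k < lb n - la n")
      case True
      then have "h \<sigma> (lb n + ins \<sigma> n + Suc k) = la n + Suc k" using h_second[of \<sigma> n "Suc k"] k(1) by blast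
      then show ?thesis using hi k(3) by simp
    next
      case False
      then have sk: "Suc k = lb n - la n" using k(2) by simp
      have "h \<sigma> (lb n + ins \<sigma> (Suc n)) = lb n"
        using h_first[of "Suc n" "lb n" \<sigma>] lb_Suc[of n] by simp
      moreover have "Suc i = lb n + ins \<sigma> (Suc n)" using k sk by (simp add: ins_Suc)
      moreover have "lb n = Suc (la n + k)" using sk lalb[of n] by linarith
      ultimately show ?thesis using hi by simp
    qed
  qed
qed

lemma h_state: "\<phi> (node b (h \<sigma> (Suc i))) = \<phi> (node b (Suc (h \<sigma> i)))"
  using h_step[of \<sigma> i] steq by metis

lemma h_ge:
  assumes "R \<sigma> (Suc n) \<le> i"
  shows "lb n \<le> h \<sigma> i"
proof -
  from h_cases[of i \<sigma>] obtain n' where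
    "(\<exists>p. pe n' \<le> p \<and> p < lb n' \<and> i = p + ins \<sigma> n') \<or> (\<sigma> n' \<and> (\<exists>k < lb n' - la n'. i = lb n' + ins \<sigma> n' + k))"
    by blast
  then show ?thesis
  proof
    assume "\<exists>p. pe n' \<le> p \<and> p < lb n' \<and> i = p + ins \<sigma> n'"
    then obtain p where p: "pe n' \<le> p" "p < lb n'" "i = p + ins \<sigma> n'" by blast
    have "i < R \<sigma> (Suc n')" using p ins_mono[of n' "Suc n'" \<sigma>] by (simp add: R_Suc)
    then have "Suc n < Suc n'" using assms R_mono[of "Suc n'" "Suc n" \<sigma>] by (meson leI le_trans not_le)
    then have "lb n \<le> pe n'" by (cases n') (auto simp: lb_mono_le)
    then show ?thesis using h_first[OF p(1,2)] p(1,3) by simp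
  next
    assume "\<sigma> n' \<and> (\<exists>k < lb n' - la n'. i = lb n' + ins \<sigma> n' + k)"
    then obtain k where k: "\<sigma> n'" "k < lb n' - la n'" "i = lb n' + ins \<sigma> n' + k" by blast
    have "i < R \<sigma> (Suc n')" using k by (simp add: R_Suc ins_Suc)
    then have "Suc n < Suc n'" using assms R_mono[of "Suc n'" "Suc n" \<sigma>] by (meson leI le_trans not_le)
    then have "lb n \<le> pe n'" by (cases n') (auto simp: lb_mono_le)
    then show ?thesis using h_second[of \<sigma> n' k] k pe_le_la[of n'] by simp
  qed
qed

lemma h_surj: "\<exists>i. h \<sigma> i = p"
proof -
  define n where "n = (LEAST n. p < lb n)"
  have ex: "p < lb (Suc p)" using lb_ge[of "Suc p"] by simp
  have 1: "p < lb n" unfolding n_def by (rule LeastI[of _ "Suc p"]) (rule ex)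
  have 2: "pe n \<le> p"
  proof (cases n)
    case 0 then show ?thesis by simp
  next
    case (Suc m)
    have "\<not> p < lb m"
    proof
      assume "p < lb m"
      then have "n \<le> m" unfolding n_def by (rule Least_le)
      then show False using Suc by simp
    qed
    then show ?thesis using Suc by simp
  qed
  show ?thesis using h_first[OF 2 1] by blast
qed

end


context pumpctx
begin

definition T :: "(nat \<Rightarrow> bool) \<Rightarrow> 'a tree" where
  "T \<sigma> = (\<lambda>v. t (gg b (h \<sigma>) 0 v))"

definition \<beta> :: "(nat \<Rightarrow> bool) \<Rightarrow> nat \<Rightarrow> dir" where
  "\<beta> \<sigma> = (\<lambda>i. b (h \<sigma> i))"

lemma spine_acc: "accseq (\<lambda>i. color A (\<phi> (node b (h \<sigma> i))))"
proof -
  define F where "F i = color A (\<phi> (node b (h \<sigma> i)))" for i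
  have fin: "finite (states A)" using wf unfolding wf_pta_def by blast
  have rng: "range F \<subseteq> color A ` states A"
    unfolding F_def using comp_states[OF wf cmp rin] by auto
  have fi: "finite (infset F)" using infset_finite_range(1)[OF rng] fin by blast
  have cin: "c \<in> infset F"
    unfolding infset_def INFM_nat
  proof (intro CollectI allI)
    fix M
    obtain m where m: "m > M" "color A (\<phi> (node b m)) = c" using colinf unfolding INFM_nat by blast
    obtain i where i: "h \<sigma> i = m" using h_surj by blast
    have "i > M" using h_le[of \<sigma> i] i m(1) by simp
    then show "\<exists>i>M. F i = c" using i m(2) unfolding F_def by blast
  qed
  have le: "x \<le> c" if "x \<in> infset F" for x
  proof -
    have "\<forall>m. \<exists>i>m. F i = x" using that unfolding infset_def INFM_nat by simp
    then obtain i where i: "i > R \<sigma> (Suc 0)" "F i = x" by blast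
    have "lb 0 \<le> h \<sigma> i" using h_ge[of \<sigma> 0 i] i(1) by simp
    then have "N \<le> h \<sigma> i" using Nle lalb[of 0] by simp
    then show ?thesis using colle i(2) unfolding F_def by blast
  qed
  have "Max (infset F) = c" using fi cin le by (intro Max_eqI) auto
  then show ?thesis unfolding accseq_def F_def using ceven by simp
qed

lemma T_in: "T \<sigma> \<in> Lq A r"
proof -
  have "comp_from A r (T \<sigma>) (\<lambda>v. \<phi> (gg b (h \<sigma>) 0 v))"
    unfolding T_def by (rule pumped_comp[OF cmp h0 h_state])
  moreover have "accepting A (\<lambda>v. \<phi> (gg b (h \<sigma>) 0 v))"
    by (rule pumped_acc[OF acc spine_acc])
  ultimately show ?thesis unfolding Lq_def by blast
qed

lemma T_node_sub: "sub (T \<sigma>) (node (\<beta> \<sigma>) j) u = t (gg b (h \<sigma>) j u)"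
proof -
  have "sub (T \<sigma>) (node (\<beta> \<sigma>) j) u = t (gg b (h \<sigma>) 0 (node (\<lambda>i. b (h \<sigma> i)) j @ u))"
    unfolding T_def \<beta>_def sub_def by (rule refl)
  also have "\<dots> = t (gg b (h \<sigma>) j u)" by (rule arg_cong[OF gg_node0])
  finally show ?thesis .
qed

lemma nonreg: "\<not> Reg K0 (sub (T \<sigma>) (node (\<beta> \<sigma>) i))"
proof -
  let ?n = i
  let ?j = "R \<sigma> (Suc ?n)"
  have hj: "h \<sigma> (?j + k) = lb ?n + k" if "k \<le> Dp (lb ?n)" for k
  proof -
    have "lb ?n + k < lb (Suc ?n)" using that spacing[of ?n] lalb[of "Suc ?n"] by simp
    then have "h \<sigma> ((lb ?n + k) + ins \<sigma> (Suc ?n)) = lb ?n + k"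
      by (intro h_first) auto
    moreover have "R \<sigma> (Suc ?n) + k = (lb ?n + k) + ins \<sigma> (Suc ?n)" by (simp add: R_Suc)
    ultimately show ?thesis by metis
  qed
  have agree: "sub (T \<sigma>) (node (\<beta> \<sigma>) ?j) u = sub t (node b (lb ?n)) u" if "length u < Dp (lb ?n)" for u
  proof -
    have "\<forall>k\<le>length u. h \<sigma> (?j + k) = h \<sigma> ?j + k"
    proof (intro allI impI)
      fix k assume "k \<le> length u"
      then have "k \<le> Dp (lb ?n)" using that by simp
      then show "h \<sigma> (?j + k) = h \<sigma> ?j + k" using hj[of k] hj[of 0] by simp
    qed
    then have "gg b (h \<sigma>) ?j u = node b (h \<sigma> ?j) @ u" by (rule gg_straight)
    then show ?thesis using T_node_sub hj[of 0] by (simp add: sub_def)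
  qed
  have nr: "\<not> Reg K0 (sub (T \<sigma>) (node (\<beta> \<sigma>) ?j))"
    by (rule spNon) (use agree in auto)
  have "i \<le> ?j" using R_ge[of "Suc i" \<sigma>] by simp
  then obtain z where "node (\<beta> \<sigma>) ?j = node (\<beta> \<sigma>) i @ z" using node_prefix by blast
  then have "sub (T \<sigma>) (node (\<beta> \<sigma>) ?j) = sub (sub (T \<sigma>) (node (\<beta> \<sigma>) i)) z" by simp
  then show ?thesis using nr not_Reg_sub by metis
qed

lemma T_distinct:
  assumes sn: "\<sigma> n" and tn: "\<not> \<tau> n" and eqb: "\<forall>m<n. \<sigma> m = \<tau> m"
  shows "T \<sigma> \<noteq> T \<tau>"
proof
  assume TT: "T \<sigma> = T \<tau>"
  have insEq: "ins \<sigma> m = ins \<tau> m" if "m \<le> n" for m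
    unfolding ins_def using eqb that by (intro sum.cong) auto
  define J0 where "J0 = lb n + ins \<sigma> n"
  have hA: "h \<sigma> i = h \<tau> i" if "i < J0" for i
  proof -
    from h_cases[of i \<sigma>] obtain n' where
      "(\<exists>p. pe n' \<le> p \<and> p < lb n' \<and> i = p + ins \<sigma> n') \<or> (\<sigma> n' \<and> (\<exists>k < lb n' - la n'. i = lb n' + ins \<sigma> n' + k))"
      by blast
    then show ?thesis
    proof
      assume "\<exists>p. pe n' \<le> p \<and> p < lb n' \<and> i = p + ins \<sigma> n'"
      then obtain p where p: "pe n' \<le> p" "p < lb n'" "i = p + ins \<sigma> n'" by blast
      show ?thesis
      proof (cases "n' \<le> n")
        case True
        then show ?thesis using h_first[OF p(1,2), of \<sigma>] h_first[OF p(1,2), of \<tau>] p(3) insEq by simp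
      next
        case False
        then have "lb n \<le> pe n'" by (cases n') (auto simp: lb_mono_le)
        moreover have "ins \<sigma> n \<le> ins \<sigma> n'" using False by (intro ins_mono) simp
        ultimately show ?thesis using that p unfolding J0_def by simp
      qed
    next
      assume "\<sigma> n' \<and> (\<exists>k < lb n' - la n'. i = lb n' + ins \<sigma> n' + k)"
      then obtain k where k: "\<sigma> n'" "k < lb n' - la n'" "i = lb n' + ins \<sigma> n' + k" by blast
      show ?thesis
      proof (cases "n' < n")
        case True
        then have "\<tau> n'" "ins \<sigma> n' = ins \<tau> n'" using eqb k(1) insEq[of n'] by auto
        then show ?thesis using h_second[of \<sigma> n' k] h_second[of \<tau> n' k] k by simp
      next
        case False
        then have "lb n \<le> lb n'" "ins \<sigma> n \<le> ins \<sigma> n'" by (auto intro: lb_mono_le ins_mono)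
        then show ?thesis using that k unfolding J0_def by simp
      qed
    qed
  qed
  have hBs: "h \<sigma> (J0 + k) = la n + k" if "k \<le> le n" for k
  proof (cases "k < lb n - la n")
    case True
    then show ?thesis using h_second[of \<sigma> n k] sn unfolding J0_def by simp
  next
    case False
    have lt: "la n + k < lb (Suc n)"
      using that spacing[of n] lalb[of "Suc n"] lalb[of n] by simp
    have "h \<sigma> ((la n + k) + ins \<sigma> (Suc n)) = la n + k"
      using False lt by (intro h_first) auto
    moreover have "J0 + k = (la n + k) + ins \<sigma> (Suc n)"
      using False sn lalb[of n] unfolding J0_def by (simp add: ins_Suc)
    ultimately show ?thesis by metis
  qed
  have hBt: "h \<tau> (J0 + k) = lb n + k" if "k \<le> le n" for k
  proof -
    have lt: "lb n + k < lb (Suc n)"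
      using that spacing[of n] lalb[of "Suc n"] by simp
    have "h \<tau> ((lb n + k) + ins \<tau> (Suc n)) = lb n + k"
      using lt by (intro h_first) auto
    moreover have "J0 + k = (lb n + k) + ins \<tau> (Suc n)"
      using tn insEq[of n] unfolding J0_def by (simp add: ins_Suc)
    ultimately show ?thesis by metis
  qed
  define J where "J = J0 + le n"
  have beq: "\<beta> \<sigma> i = \<beta> \<tau> i" if "i < J" for i
  proof (cases "i < J0")
    case True
    then show ?thesis using hA unfolding \<beta>_def by simp
  next
    case False
    define k where "k = i - J0"
    have k: "k < le n" "i = J0 + k" using False that unfolding k_def J_def by auto
    have "letter t b (la n + k) = letter t b (lb n + k)" using esame[OF k(1)] .
    then have "b (la n + k) = b (lb n + k)" by (simp add: letter_def)
    then show ?thesis using hBs[of k] hBt[of k] k unfolding \<beta>_def by simp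
  qed
  define v where "v = node (\<beta> \<sigma>) J"
  have v2: "v = node (\<beta> \<tau>) J" unfolding v_def node_def using beq by simp
  define x where "x = la n + le n"
  define y where "y = lb n + le n"
  have hx: "h \<sigma> J = x" using hBs[of "le n"] unfolding J_def x_def by simp
  have hy: "h \<tau> J = y" using hBt[of "le n"] unfolding J_def y_def by simp
  have yge: "la 0 \<le> y" using la_mono_le[of 0 n] lalb[of n] unfolding y_def by simp
  have xge: "la 0 \<le> x" using la_mono_le[of 0 n] unfolding x_def by simp
  have gs: "sub (T \<sigma>) v u = t (gg b (h \<sigma>) J u)" for u unfolding v_def by (rule T_node_sub)
  have gt: "sub (T \<tau>) v u = t (gg b (h \<tau>) J u)" for u unfolding v2 by (rule T_node_sub)
  have L1: "t (node b x) = t (node b y)"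
    using gs[of "[]"] gt[of "[]"] hx hy TT by simp
  have offs: "sub (T \<sigma>) (v @ [d]) = sub t (off b x)" if "d \<noteq> b x" for d
  proof -
    have "d = flip (b x)" using that by (cases d; cases "b x") auto
    then show ?thesis using gs that hx by (auto simp: sub_def fun_eq_iff off_def)
  qed
  have offt: "sub (T \<tau>) (v @ [d]) = sub t (off b y)" if "d \<noteq> b y" for d
  proof -
    have "d = flip (b y)" using that by (cases d; cases "b y") auto
    then show ?thesis using gt that hy by (auto simp: sub_def fun_eq_iff off_def)
  qed
  have L2: "b x = b y"
  proof (rule ccontr)
    assume ne: "b x \<noteq> b y"
    have "node (\<beta> \<sigma>) (Suc J) = v @ [b x]" unfolding v_def using hx by (simp add: node_Suc \<beta>_def)
    then have "\<not> Reg K0 (sub (T \<sigma>) (v @ [b x]))" using nonreg[of \<sigma> "Suc J"] by simp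
    moreover have "Reg K0 (sub (T \<tau>) (v @ [b x]))" using offt[of "b x"] ne offReg[OF yge] by simp
    ultimately show False using TT by simp
  qed
  have L3: "sub t (off b x) = sub t (off b y)"
    using offs[of "flip (b x)"] offt[of "flip (b x)"] L2 TT by simp
  have "letter t b x = letter t b y" using L1 L2 L3 by (simp add: letter_def)
  then show False using ediff[of n] unfolding x_def y_def by simp
qed

lemma inj_T: "inj T"
proof (rule injI, rule ccontr)
  fix \<sigma> \<tau> assume eq: "T \<sigma> = T \<tau>" and ne: "\<sigma> \<noteq> \<tau>"
  then have "\<exists>n. \<sigma> n \<noteq> \<tau> n" by (auto simp: fun_eq_iff)
  define n where "n = (LEAST n. \<sigma> n \<noteq> \<tau> n)"
  have n: "\<sigma> n \<noteq> \<tau> n" unfolding n_def using \<open>\<exists>n. \<sigma> n \<noteq> \<tau> n\<close> by (rule LeastI_ex)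
  have b: "\<forall>m<n. \<sigma> m = \<tau> m" unfolding n_def using not_less_Least by blast
  show False
  proof (cases "\<sigma> n")
    case True
    then show False using T_distinct[of \<sigma> n \<tau>] n b eq by simp
  next
    case False
    then show False using T_distinct[of \<tau> n \<sigma>] n b eq by simp
  qed
qed

theorem pump_uncountable: "uncountable (Lq A r)"
  using uncountable_inj_image[OF inj_T] T_in by blast

end


lemma antichain_subset: "antichain W \<Longrightarrow> V \<subseteq> W \<Longrightarrow> antichain V"
  unfolding antichain_def by blast

theorem branch_hits_Reg:
  assumes wf: "wf_pta A" and cmp: "comp_from A r t \<phi>" and acc: "accepting A \<phi>"
    and rin: "r \<in> states A" and cnt: "countable (Lq A r)"
  shows "\<exists>m. Reg (card (states A) + card (states A) * card (states A)) (sub t (node b m))"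
proof (rule ccontr)
  define nq where "nq = card (states A)"
  define K0 where "K0 = nq"
  define K where "K = nq + nq * nq"
  assume "\<not> ?thesis"
  then have H: "\<And>m. \<not> Reg K (sub t (node b m))" unfolding K_def nq_def by blast
  have H0: "\<And>m. \<not> Reg K0 (sub t (node b m))"
    using H Reg_mono[of K0 K] unfolding K0_def K_def by auto
  have finS: "finite (states A)" using wf unfolding wf_pta_def by blast
  have "finite {m. \<not> Reg K0 (sub t (off b m))}"
  proof (rule ccontr)
    define M where "M = {m. \<not> Reg K0 (sub t (off b m))}"
    assume "infinite {m. \<not> Reg K0 (sub t (off b m))}"
    then have infM: "infinite M" unfolding M_def .
    define W where "W n = off b (enumerate M n)" for n
    have "inj (enumerate M)" using infM by (simp add: strict_mono_imp_inj_on strict_mono_enumerate)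
    then have injW: "inj W" unfolding W_def using inj_off by (simp add: inj_compose[unfolded comp_def])
    have acW: "antichain (range W)"
      by (rule antichain_subset[OF off_antichain]) (auto simp: W_def)
    have alt: "\<exists>s'. s' \<in> Lq A (\<phi> (W n)) \<and> s' \<noteq> sub t (W n)" for n
    proof (rule ccontr)
      assume "\<not> (\<exists>s'. s' \<in> Lq A (\<phi> (W n)) \<and> s' \<noteq> sub t (W n))"
      then have u: "\<forall>s\<in>Lq A (\<phi> (W n)). s = sub t (W n)" by blast
      have "Reg (card (states A)) (sub t (W n))"
        by (rule singleton_Reg[OF wf comp_from_sub[OF cmp] accepting_sub[OF acc] comp_states[OF wf cmp rin] u])
      moreover have "enumerate M n \<in> M" using infM by (rule enumerate_in_set)
      ultimately show False unfolding M_def W_def K0_def nq_def by simp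
    qed
    have "uncountable (Lq A r)" by (rule antichain_uncountable[OF cmp acc injW acW alt])
    then show False using cnt by simp
  qed
  then obtain n1 where n1: "\<And>m. n1 \<le> m \<Longrightarrow> Reg K0 (sub t (off b m))"
    using finite_nat_bounded by (metis (mono_tags, lifting) lessThan_iff mem_Collect_eq not_le subset_eq)
  define F where "F m = color A (\<phi> (node b m))" for m
  have rng: "range F \<subseteq> color A ` states A" unfolding F_def using comp_states[OF wf cmp rin] by auto
  have finI: "finite (infset F)" and neI: "infset F \<noteq> {}"
    using infset_finite_range[OF rng] finS by auto
  define c where "c = Max (infset F)"
  have ceven: "even c" using acc unfolding accepting_accseq accseq_def c_def F_def by blast
  have cin: "c \<in> infset F" unfolding c_def using finI neI by (rule Max_in)
  obtain N where N: "\<And>m. N \<le> m \<Longrightarrow> F m \<in> infset F" using eventually_in_infset[OF rng] finS by blast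
  have colle: "\<And>m. N \<le> m \<Longrightarrow> F m \<le> c" unfolding c_def using N finI by (simp add: Max_ge)
  \<comment> \<open>Step 3: short non-periodic loops in every window\<close>
  define m0 where "m0 = max N n1"
  have loopex: "\<exists>a a' e. m \<le> a \<and> a < a' \<and> \<phi> (node b a) = \<phi> (node b a') \<and>
      letter t b (a + e) \<noteq> letter t b (a' + e) \<and> (\<forall>k<e. letter t b (a + k) = letter t b (a' + k))"
    if m: "m0 \<le> m" for m
  proof -
    define g where "g j = \<phi> (node b j)" for j
    have "g ` {m..m + nq} \<subseteq> states A" unfolding g_def using comp_states[OF wf cmp rin] by auto
    moreover have "card {m..m + nq} > card (states A)" unfolding nq_def by simp
    ultimately have "\<not> inj_on g {m..m + nq}"
      using card_inj_on_le[of g "{m..m + nq}" "states A"] finS by fastforce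
    then obtain j1 j2 where j: "j1 \<in> {m..m + nq}" "j2 \<in> {m..m + nq}" "j1 \<noteq> j2" "g j1 = g j2"
      unfolding inj_on_def by blast
    obtain a a' where aa: "m \<le> a" "a < a'" "a' \<le> m + nq" "\<phi> (node b a) = \<phi> (node b a')"
      using j unfolding g_def by (metis atLeastAtMost_iff linorder_neqE_nat)
    have "\<exists>e. letter t b (a + e) \<noteq> letter t b (a' + e)"
    proof (rule ccontr)
      assume "\<not> (\<exists>e. letter t b (a + e) \<noteq> letter t b (a' + e))"
      then have per: "\<forall>k. letter t b (a + k) = letter t b (a + (a' - a) + k)" using aa(2) by simp
      have offR: "\<forall>k<a' - a. Reg K0 (sub t (off b (a + k)))"
        using n1 m aa(1) unfolding m0_def by simp
      have "Reg ((a' - a) + (a' - a) * K0) (sub t (node b a))"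
        using periodic_Reg[OF per _ offR] aa(2) by simp
      moreover have "(a' - a) + (a' - a) * K0 \<le> K"
      proof -
        have l: "a' - a \<le> nq" using aa by simp
        then have "(a' - a) * nq \<le> nq * nq" by (rule mult_le_mono1)
        then show ?thesis using l unfolding K_def K0_def by linarith
      qed
      ultimately show False using H Reg_mono by blast
    qed
    then obtain e where e: "letter t b (a + e) \<noteq> letter t b (a' + e)"
      "\<forall>k<e. letter t b (a + k) = letter t b (a' + k)"
      using exists_least_iff[of "\<lambda>e. letter t b (a + e) \<noteq> letter t b (a' + e)"] by blast
    show ?thesis using aa e by blast
  qed
  \<comment> \<open>Step 4: choose spaced loops and pump\<close>
  have dex: "\<exists>D. \<forall>s'. (\<forall>u. length u < D \<longrightarrow> s' u = sub t (node b p) u) \<longrightarrow> \<not> Reg K0 s'" for p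
    using not_Reg_witness[OF H0[of p]] by blast
  define Dp where "Dp p = (SOME D. \<forall>s'. (\<forall>u. length u < D \<longrightarrow> s' u = sub t (node b p) u) \<longrightarrow> \<not> Reg K0 s')" for p
  have Dp: "\<And>p s'. (\<forall>u. length u < Dp p \<longrightarrow> s' u = sub t (node b p) u) \<Longrightarrow> \<not> Reg K0 s'"
    unfolding Dp_def using someI_ex[OF dex] by blast
  define P where "P m x = (case x of (a, a', e) \<Rightarrow> m \<le> a \<and> a < a' \<and> \<phi> (node b a) = \<phi> (node b a') \<and>
      letter t b (a + e) \<noteq> letter t b (a' + e) \<and> (\<forall>k<e. letter t b (a + k) = letter t b (a' + k)))" for m x
  define sel where "sel m = (SOME x. P m x)" for m
  have sel: "P m (sel m)" if "m0 \<le> m" for m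
  proof -
    have "\<exists>x. P m x" using loopex[OF that] unfolding P_def by auto
    then show ?thesis unfolding sel_def by (rule someI_ex)
  qed
  define nxt where "nxt s = (case sel s of (a, a', e) \<Rightarrow> a' + e + Dp a' + 1)" for s
  define start where "start n = (nxt ^^ n) m0" for n
  define la where "la n = fst (sel (start n))" for n
  define lb where "lb n = fst (snd (sel (start n)))" for n
  define le where "le n = snd (snd (sel (start n)))" for n
  have selP: "start n \<le> la n \<and> la n < lb n \<and> \<phi> (node b (la n)) = \<phi> (node b (lb n)) \<and>
      letter t b (la n + le n) \<noteq> letter t b (lb n + le n) \<and> (\<forall>k<le n. letter t b (la n + k) = letter t b (lb n + k))"
    if "m0 \<le> start n" for n
    using sel[OF that] unfolding P_def la_def lb_def le_def by (auto split: prod.splits)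
  have start_Suc: "start (Suc n) = lb n + le n + Dp (lb n) + 1" for n
    unfolding start_def la_def lb_def le_def nxt_def by (simp split: prod.splits)
  have st_ge: "m0 \<le> start n" for n
  proof (induction n)
    case 0 then show ?case by (simp add: start_def)
  next
    case (Suc n)
    then show ?case using selP[OF Suc] start_Suc[of n] by simp
  qed
  have pc: "pumpctx A t \<phi> r b la lb le Dp K0 N c"
  proof (unfold_locales)
    show "wf_pta A" by (rule wf)
    show "comp_from A r t \<phi>" by (rule cmp)
    show "accepting A \<phi>" by (rule acc)
    show "r \<in> states A" by (rule rin)
    fix n
    show "la n < lb n" using selP[OF st_ge] by blast
    show "lb n + le n + Dp (lb n) < la (Suc n)"
      using selP[OF st_ge, of "Suc n"] start_Suc[of n] by simp
    show "\<phi> (node b (la n)) = \<phi> (node b (lb n))" using selP[OF st_ge] by blast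
    show "letter t b (la n + le n) \<noteq> letter t b (lb n + le n)" using selP[OF st_ge] by blast
    fix k
    show "k < le n \<Longrightarrow> letter t b (la n + k) = letter t b (lb n + k)" using selP[OF st_ge] by blast
  next
    fix m
    assume "la 0 \<le> m"
    moreover have "m0 \<le> la 0" using selP[OF st_ge, of 0] st_ge[of 0] by simp
    ultimately show "Reg K0 (sub t (off b m))" using n1 unfolding m0_def by simp
  next
    fix n s'
    show "\<forall>u. length u < Dp (lb n) \<longrightarrow> s' u = sub t (node b (lb n)) u \<Longrightarrow> \<not> Reg K0 s'" by (rule Dp)
  next
    show "N \<le> la 0" using selP[OF st_ge, of 0] st_ge[of 0] unfolding m0_def by simp
  next
    fix m
    show "N \<le> m \<Longrightarrow> color A (\<phi> (node b m)) \<le> c" using colle unfolding F_def by blast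
  next
    show "\<exists>\<^sub>\<infinity>m. color A (\<phi> (node b m)) = c" using cin unfolding infset_def F_def by simp
  next
    show "even c" by (rule ceven)
  qed
  have "uncountable (Lq A r)" by (rule pumpctx.pump_uncountable[OF pc])
  then show False using cnt by simp
qed


section \<open>The unambiguous automaton\<close>

datatype 'a ast = Pt "'a tree" | Core "nat set"

definition KK :: "'a pta \<Rightarrow> nat" where
  "KK A = card (states A) + card (states A) * card (states A)"

definition Pat :: "'a pta \<Rightarrow> 'a tree set" where
  "Pat A = {s. Reg (KK A) s}"

definition AS :: "'a pta \<Rightarrow> 'a ast set" where
  "AS A = Pt ` Pat A \<union> Core ` Pow (states A)"

definition enc :: "'a pta \<Rightarrow> 'a ast \<Rightarrow> nat" where
  "enc A x = (case x of Pt s \<Rightarrow> 2 * to_nat_on (Pat A) s | Core T \<Rightarrow> 2 * set_encode T + 1)"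

definition truetyp :: "'a pta \<Rightarrow> 'a tree \<Rightarrow> nat set" where
  "truetyp A s = {q \<in> states A. s \<in> Lq A q}"

definition atyp :: "'a pta \<Rightarrow> 'a ast \<Rightarrow> nat set" where
  "atyp A x = (case x of Pt s \<Rightarrow> truetyp A s | Core T \<Rightarrow> T)"

definition Post :: "'a pta \<Rightarrow> 'a \<Rightarrow> nat set \<Rightarrow> nat set \<Rightarrow> nat set" where
  "Post A a T1 T2 = {q \<in> states A. \<exists>q1\<in>T1. \<exists>q2\<in>T2. (q, a, q1, q2) \<in> trans A}"

definition isPat :: "'a pta \<Rightarrow> 'a \<Rightarrow> 'a ast \<Rightarrow> 'a ast \<Rightarrow> bool" where
  "isPat A a y z \<longleftrightarrow> (\<exists>s\<in>Pat A. s [] = a \<and> y = Pt (sub s [Lft]) \<and> z = Pt (sub s [Rgt]))"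

definition atrans :: "'a pta \<Rightarrow> ('a ast \<times> 'a \<times> 'a ast \<times> 'a ast) set" where
  "atrans A = {(x, a, y, z). x \<in> AS A \<and> y \<in> AS A \<and> z \<in> AS A \<and>
     ((\<exists>s. x = Pt s \<and> a = s [] \<and> y = Pt (sub s [Lft]) \<and> z = Pt (sub s [Rgt])) \<or>
      (\<exists>T. x = Core T \<and> T = Post A a (atyp A y) (atyp A z) \<and> \<not> isPat A a y z))}"

definition ainit :: "'a pta \<Rightarrow> 'a ast set" where
  "ainit A = {Pt s | s. s \<in> Pat A \<and> s \<in> lang A} \<union> {Core T | T. T \<subseteq> states A \<and> T \<inter> initial A \<noteq> {}}"

definition Bpta :: "'a pta \<Rightarrow> 'a pta" where
  "Bpta A = \<lparr>states = enc A ` AS A, initial = enc A ` ainit A,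
     trans = (\<lambda>(x, a, y, z). (enc A x, a, enc A y, enc A z)) ` atrans A,
     color = (\<lambda>n. n mod 2)\<rparr>"

lemma Pat_sub: "s \<in> Pat A \<Longrightarrow> sub s v \<in> Pat A"
  unfolding Pat_def using Reg_sub by blast

lemma finite_Pat: "finite (Pat (A :: ('a::finite) pta))"
  unfolding Pat_def by (rule finite_Reg)

lemma enc_inj:
  assumes "finite (states A)" "x \<in> AS (A :: ('a::finite) pta)" "y \<in> AS A" "enc A x = enc A y"
  shows "x = y"
proof -
  have cP: "countable (Pat A)" using finite_Pat by (rule countable_finite)
  show ?thesis
  proof (cases x)
    case (Pt s)
    show ?thesis
    proof (cases y)
      case (Pt s')
      have "s \<in> Pat A" "s' \<in> Pat A" using assms(2,3) \<open>x = Pt s\<close> \<open>y = Pt s'\<close> unfolding AS_def by auto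
      moreover have "to_nat_on (Pat A) s = to_nat_on (Pat A) s'"
        using assms(4) \<open>x = Pt s\<close> \<open>y = Pt s'\<close> by (simp add: enc_def)
      ultimately show ?thesis using inj_on_to_nat_on[OF cP] \<open>x = Pt s\<close> \<open>y = Pt s'\<close> by (auto dest: inj_onD)
    next
      case (Core T)
      then show ?thesis using assms(4) \<open>x = Pt s\<close> by (simp add: enc_def) presburger
    qed
  next
    case (Core T)
    show ?thesis
    proof (cases y)
      case (Pt s')
      then show ?thesis using assms(4) \<open>x = Core T\<close> by (simp add: enc_def) presburger
    next
      case (Core T')
      have "T \<subseteq> states A" "T' \<subseteq> states A" using assms(2,3) \<open>x = Core T\<close> \<open>y = Core T'\<close> unfolding AS_def by auto
      then have "finite T" "finite T'" using assms(1) finite_subset by auto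
      moreover have "set_encode T = set_encode T'"
        using assms(4) \<open>x = Core T\<close> \<open>y = Core T'\<close> by (simp add: enc_def)
      ultimately show ?thesis using inj_on_set_encode \<open>x = Core T\<close> \<open>y = Core T'\<close> by (auto dest: inj_onD)
    qed
  qed
qed

lemma color_enc: "color (Bpta A) (enc A x) = (case x of Pt s \<Rightarrow> 0 | Core T \<Rightarrow> 1)"
  by (cases x) (simp_all add: Bpta_def enc_def)

lemma wf_Bpta:
  assumes "finite (states A)"
  shows "wf_pta (Bpta (A :: ('a::finite) pta))"
proof -
  have "finite (AS A)" unfolding AS_def using finite_Pat[of A] assms by simp
  moreover have "ainit A \<subseteq> AS A"
    unfolding ainit_def AS_def Pat_def by auto
  ultimately show ?thesis
    unfolding wf_pta_def Bpta_def atrans_def by auto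
qed

lemma Post_subset: "Post A a T1 T2 \<subseteq> states A"
  unfolding Post_def by auto

lemma truetyp_local:
  assumes "wf_pta A"
  shows "truetyp A s = Post A (s []) (truetyp A (sub s [Lft])) (truetyp A (sub s [Rgt]))"
proof -
  have "q \<in> truetyp A s \<longleftrightarrow> q \<in> Post A (s []) (truetyp A (sub s [Lft])) (truetyp A (sub s [Rgt]))" for q
  proof
    assume "q \<in> truetyp A s"
    then have q: "q \<in> states A" "s \<in> Lq A q" unfolding truetyp_def by auto
    then obtain q1 q2 where "(q, s [], q1, q2) \<in> trans A" "sub s [Lft] \<in> Lq A q1" "sub s [Rgt] \<in> Lq A q2"
      using Lq_local by blast
    moreover then have "q1 \<in> states A" "q2 \<in> states A" using assms unfolding wf_pta_def by auto
    ultimately show "q \<in> Post A (s []) (truetyp A (sub s [Lft])) (truetyp A (sub s [Rgt]))"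
      using q unfolding Post_def truetyp_def by blast
  next
    assume "q \<in> Post A (s []) (truetyp A (sub s [Lft])) (truetyp A (sub s [Rgt]))"
    then show "q \<in> truetyp A s" unfolding Post_def truetyp_def using Lq_local by blast
  qed
  then show ?thesis by blast
qed

lemma accseq_const_eventually:
  assumes "\<forall>n\<ge>m. f n = k"
  shows "accseq f \<longleftrightarrow> even k"
proof -
  have "accseq f \<longleftrightarrow> accseq (\<lambda>_. k)"
    using accseq_shift_eq[of m f 0 "\<lambda>_. k" 0] assms by simp
  moreover have "infset (\<lambda>_::nat. k) = {k}" unfolding infset_def by auto
  ultimately show ?thesis unfolding accseq_def by simp
qed


lemma sub_root[simp]: "sub t v [] = t v"
  by (simp add: sub_def)

lemma tree_eq_children:
  assumes "s [] = s' []" "sub s [Lft] = sub s' [Lft]" "sub s [Rgt] = sub s' [Rgt]"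
  shows "s = s'"
proof
  fix u show "s u = s' u"
  proof (cases u)
    case Nil then show ?thesis using assms(1) by simp
  next
    case (Cons d u')
    then show ?thesis using assms(2,3) by (cases d) (auto simp: sub_def fun_eq_iff)
  qed
qed

locale Bctx =
  fixes A :: "('a::finite) pta"
  assumes wf: "wf_pta A" and cnt: "countable (lang A)"
begin

lemma finQ: "finite (states A)" using wf unfolding wf_pta_def by blast

lemma wfB: "wf_pta (Bpta A)" using wf_Bpta[OF finQ] .

lemma run_decode:
  assumes c: "comp_from (Bpta A) r0 t \<rho>" and r0: "r0 \<in> states (Bpta A)"
  shows "\<exists>\<alpha>. (\<forall>v. \<alpha> v \<in> AS A \<and> \<rho> v = enc A (\<alpha> v)) \<and>
             (\<forall>v. (\<alpha> v, t v, \<alpha> (v @ [Lft]), \<alpha> (v @ [Rgt])) \<in> atrans A)"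
proof -
  define \<alpha> where "\<alpha> v = inv_into (AS A) (enc A) (\<rho> v)" for v
  have inS: "\<rho> v \<in> enc A ` AS A" for v
    using comp_states[OF wfB c r0, of v] by (simp add: Bpta_def)
  have a1: "\<alpha> v \<in> AS A \<and> \<rho> v = enc A (\<alpha> v)" for v
    using inS[of v] unfolding \<alpha>_def by (simp add: inv_into_into f_inv_into_f)
  have a2: "(\<alpha> v, t v, \<alpha> (v @ [Lft]), \<alpha> (v @ [Rgt])) \<in> atrans A" for v
  proof -
    have "(\<rho> v, t v, \<rho> (v @ [Lft]), \<rho> (v @ [Rgt])) \<in> trans (Bpta A)"
      using c unfolding comp_from_def by blast
    then obtain x a y z where xyz: "(x, a, y, z) \<in> atrans A" "\<rho> v = enc A x" "t v = a"
      "\<rho> (v @ [Lft]) = enc A y" "\<rho> (v @ [Rgt]) = enc A z"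
      unfolding Bpta_def by auto
    have inAS: "x \<in> AS A" "y \<in> AS A" "z \<in> AS A" using xyz(1) unfolding atrans_def by auto
    have "x = \<alpha> v" using enc_inj[OF finQ inAS(1)] a1[of v] xyz(2) by simp
    moreover have "y = \<alpha> (v @ [Lft])" using enc_inj[OF finQ inAS(2)] a1[of "v @ [Lft]"] xyz(4) by simp
    moreover have "z = \<alpha> (v @ [Rgt])" using enc_inj[OF finQ inAS(3)] a1[of "v @ [Rgt]"] xyz(5) by simp
    ultimately show ?thesis using xyz(1,3) by simp
  qed
  show ?thesis using a1 a2 by blast
qed

lemma Pt_correct:
  assumes tr: "\<And>v. (\<alpha> v, t v, \<alpha> (v @ [Lft]), \<alpha> (v @ [Rgt])) \<in> atrans A"
  shows "\<alpha> v = Pt s \<Longrightarrow> sub t v = s"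
proof -
  have "\<forall>v s. \<alpha> v = Pt s \<longrightarrow> t (v @ u) = s u" for u
  proof (induction u)
    case Nil
    show ?case
    proof (intro allI impI)
      fix v s assume "\<alpha> v = Pt s"
      then show "t (v @ []) = s []" using tr[of v] unfolding atrans_def by auto
    qed
  next
    case (Cons d u)
    show ?case
    proof (intro allI impI)
      fix v s assume a: "\<alpha> v = Pt s"
      then have "\<alpha> (v @ [d]) = Pt (sub s [d])" using tr[of v] unfolding atrans_def by (cases d) auto
      then have "t ((v @ [d]) @ u) = sub s [d] u" using Cons.IH by blast
      then show "t (v @ d # u) = s (d # u)" by (simp add: sub_def)
    qed
  qed
  then show "\<alpha> v = Pt s \<Longrightarrow> sub t v = s" by (auto simp: sub_def fun_eq_iff)
qed

definition isCore :: "'a ast \<Rightarrow> bool" where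
  "isCore x \<longleftrightarrow> (\<exists>T. x = Core T)"

lemma Core_correct:
  assumes tr: "\<And>v. (\<alpha> v, t v, \<alpha> (v @ [Lft]), \<alpha> (v @ [Rgt])) \<in> atrans A"
    and acc: "accepting (Bpta A) (\<lambda>v. enc A (\<alpha> v))"
  shows "\<alpha> v = Core T \<Longrightarrow> sub t v \<notin> Pat A \<and> T = truetyp A (sub t v)"
proof -
  define Rel where "Rel = {(v @ [d], v) | v d. isCore (\<alpha> (v @ [d])) \<and> isCore (\<alpha> v)}"
  have wfR: "wf Rel"
    unfolding wf_iff_no_infinite_down_chain
  proof
    assume "\<exists>f. \<forall>i. (f (Suc i), f i) \<in> Rel"
    then obtain f where f: "\<And>i. (f (Suc i), f i) \<in> Rel" by blast
    define d where "d i = last (f (Suc i))" for i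
    have fS: "f (Suc i) = f i @ [d i]" for i using f[of i] unfolding Rel_def d_def by auto
    have cf: "isCore (\<alpha> (f i))" for i using f[of i] unfolding Rel_def by auto
    have fi: "f i = f 0 @ node d i" for i
      by (induction i) (simp_all add: fS node_Suc)
    define br where "br = through (f 0) d"
    have nb: "node br (length (f 0) + i) = f i" for i
      unfolding br_def using node_through fi by metis
    have "accseq (\<lambda>n. color (Bpta A) (enc A (\<alpha> (node br n))))"
      using acc unfolding accepting_accseq by blast
    moreover have "\<forall>n\<ge>length (f 0). color (Bpta A) (enc A (\<alpha> (node br n))) = 1"
    proof (intro allI impI)
      fix n assume "length (f 0) \<le> n"
      then have "node br n = f (n - length (f 0))" using nb[of "n - length (f 0)"] by simp
      then show "color (Bpta A) (enc A (\<alpha> (node br n))) = 1"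
        using cf[of "n - length (f 0)"] unfolding isCore_def by (auto simp: color_enc)
    qed
    ultimately show False using accseq_const_eventually by fastforce
  qed
  have "\<forall>T. \<alpha> v = Core T \<longrightarrow> sub t v \<notin> Pat A \<and> T = truetyp A (sub t v)"
  proof (induction v rule: wf_induct[OF wfR])
    case (1 v)
    show ?case
    proof (intro allI impI)
      fix T assume av: "\<alpha> v = Core T"
      have child: "atyp A (\<alpha> (v @ [d])) = truetyp A (sub t (v @ [d])) \<and>
                   (sub t (v @ [d]) \<in> Pat A \<longleftrightarrow> (\<exists>s. \<alpha> (v @ [d]) = Pt s))" for d
      proof (cases "\<alpha> (v @ [d])")
        case (Pt s)
        have "sub t (v @ [d]) = s" using Pt_correct[OF tr Pt] .
        moreover have "\<alpha> (v @ [d]) \<in> AS A" using tr[of v] unfolding atrans_def by (cases d) auto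
        ultimately show ?thesis using Pt unfolding atyp_def AS_def by auto
      next
        case (Core T')
        have "(v @ [d], v) \<in> Rel" unfolding Rel_def isCore_def using Core av by blast
        then have "sub t (v @ [d]) \<notin> Pat A \<and> T' = truetyp A (sub t (v @ [d]))" using 1 Core by blast
        then show ?thesis using Core unfolding atyp_def by auto
      qed
      have trv: "T = Post A (t v) (atyp A (\<alpha> (v @ [Lft]))) (atyp A (\<alpha> (v @ [Rgt])))"
        "\<not> isPat A (t v) (\<alpha> (v @ [Lft])) (\<alpha> (v @ [Rgt]))"
        using tr[of v] av unfolding atrans_def by auto
      have "T = truetyp A (sub t v)"
        using trv(1) child[of Lft] child[of Rgt] truetyp_local[OF wf, of "sub t v"] by simp
      moreover have "sub t v \<notin> Pat A"
      proof
        assume sP: "sub t v \<in> Pat A"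
        have "sub t (v @ [d]) \<in> Pat A" for d using Pat_sub[OF sP, of "[d]"] by simp
        then have "\<alpha> (v @ [d]) = Pt (sub t (v @ [d]))" for d
          using child[of d] Pt_correct[OF tr] by blast
        then have "isPat A (t v) (\<alpha> (v @ [Lft])) (\<alpha> (v @ [Rgt]))"
          unfolding isPat_def using sP by (intro bexI[of _ "sub t v"]) (auto simp: sub_def)
        then show False using trv(2) by simp
      qed
      ultimately show "sub t v \<notin> Pat A \<and> T = truetyp A (sub t v)" by simp
    qed
  qed
  then show "\<alpha> v = Core T \<Longrightarrow> sub t v \<notin> Pat A \<and> T = truetyp A (sub t v)" by blast
qed

end


context Bctx
begin

definition canon :: "'a tree \<Rightarrow> dir list \<Rightarrow> 'a ast" where
  "canon t v = (if sub t v \<in> Pat A then Pt (sub t v) else Core (truetyp A (sub t v)))"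

lemma atyp_canon: "atyp A (canon t v) = truetyp A (sub t v)"
  unfolding canon_def atyp_def by auto

lemma ACC_canon:
  assumes "\<rho> \<in> ACC (Bpta A) t"
  shows "\<rho> = (\<lambda>v. enc A (canon t v))"
proof -
  have comp: "computation (Bpta A) t \<rho>" and acc: "accepting (Bpta A) \<rho>"
    using assms unfolding ACC_def by auto
  then have c: "comp_from (Bpta A) (\<rho> []) t \<rho>" and r0: "\<rho> [] \<in> initial (Bpta A)"
    unfolding computation_comp_from by auto
  have r0': "\<rho> [] \<in> states (Bpta A)" using r0 wfB unfolding wf_pta_def by blast
  obtain \<alpha> where a1: "\<And>v. \<alpha> v \<in> AS A \<and> \<rho> v = enc A (\<alpha> v)"
    and a2: "\<And>v. (\<alpha> v, t v, \<alpha> (v @ [Lft]), \<alpha> (v @ [Rgt])) \<in> atrans A"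
    using run_decode[OF c r0'] by blast
  have rho: "\<rho> = (\<lambda>v. enc A (\<alpha> v))" using a1 by auto
  have acc': "accepting (Bpta A) (\<lambda>v. enc A (\<alpha> v))" using acc rho by simp
  have "\<alpha> v = canon t v" for v
  proof (cases "\<alpha> v")
    case (Pt s)
    have "sub t v = s" using Pt_correct[OF a2 Pt] .
    moreover have "s \<in> Pat A" using a1[of v] Pt unfolding AS_def by auto
    ultimately show ?thesis using Pt unfolding canon_def by simp
  next
    case (Core T)
    then show ?thesis using Core_correct[OF a2 acc' Core] unfolding canon_def by simp
  qed
  then show ?thesis using rho by simp
qed

lemma B_unique:
  assumes "\<rho>1 \<in> ACC (Bpta A) t" "\<rho>2 \<in> ACC (Bpta A) t"
  shows "\<rho>1 = \<rho>2"
proof -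
  have "\<rho>1 = (\<lambda>v. enc A (canon t v))" by (rule ACC_canon[OF assms(1)])
  moreover have "\<rho>2 = (\<lambda>v. enc A (canon t v))" by (rule ACC_canon[OF assms(2)])
  ultimately show ?thesis by (rule trans[OF _ sym])
qed

lemma B_sound:
  assumes "t \<in> lang (Bpta A)"
  shows "t \<in> lang A"
proof -
  obtain \<rho> where \<rho>: "\<rho> \<in> ACC (Bpta A) t" using assms unfolding lang_def by blast
  have e: "\<rho> = (\<lambda>v. enc A (canon t v))" by (rule ACC_canon[OF \<rho>])
  have "\<rho> [] \<in> initial (Bpta A)" using \<rho> unfolding ACC_def computation_def by auto
  then obtain x where x: "x \<in> ainit A" "enc A (canon t []) = enc A x" using e by (auto simp: Bpta_def)
  have xAS: "x \<in> AS A" using x(1) unfolding ainit_def AS_def Pat_def by auto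
  have cAS: "canon t [] \<in> AS A" unfolding canon_def AS_def truetyp_def by auto
  have "canon t [] = x" using enc_inj[OF finQ cAS xAS x(2)] .
  then have "canon t [] \<in> ainit A" using x(1) by simp
  then show ?thesis
  proof (cases "sub t [] \<in> Pat A")
    case True
    then show ?thesis using \<open>canon t [] \<in> ainit A\<close> unfolding canon_def ainit_def by auto
  next
    case False
    then have "truetyp A t \<inter> initial A \<noteq> {}"
      using \<open>canon t [] \<in> ainit A\<close> unfolding canon_def ainit_def by auto
    then obtain q where "q \<in> initial A" "t \<in> Lq A q" unfolding truetyp_def by auto
    then show ?thesis using lang_Lq by blast
  qed
qed

lemma B_complete:
  assumes tL: "t \<in> lang A"
  shows "t \<in> lang (Bpta A)"
proof -
  define \<rho> where "\<rho> v = enc A (canon t v)" for v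
  have canAS: "canon t v \<in> AS A" for v unfolding canon_def AS_def truetyp_def by auto
  have tr: "(canon t v, t v, canon t (v @ [Lft]), canon t (v @ [Rgt])) \<in> atrans A" for v
  proof (cases "sub t v \<in> Pat A")
    case True
    have "sub t (v @ [d]) \<in> Pat A" for d using Pat_sub[OF True, of "[d]"] by simp
    then have cd: "canon t (v @ [d]) = Pt (sub (sub t v) [d])" and
      asd: "Pt (sub (sub t v) [d]) \<in> AS A" for d unfolding canon_def AS_def by auto
    have cv: "canon t v = Pt (sub t v)" and asv: "Pt (sub t v) \<in> AS A"
      using True unfolding canon_def AS_def by auto
    show ?thesis unfolding cd cv atrans_def using asd asv by auto
  next
    case False
    have T: "truetyp A (sub t v) = Post A (t v) (atyp A (canon t (v @ [Lft]))) (atyp A (canon t (v @ [Rgt])))"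
      using truetyp_local[OF wf, of "sub t v"] by (simp add: atyp_canon)
    have np: "\<not> isPat A (t v) (canon t (v @ [Lft])) (canon t (v @ [Rgt]))"
    proof
      assume "isPat A (t v) (canon t (v @ [Lft])) (canon t (v @ [Rgt]))"
      then obtain s where s: "s \<in> Pat A" "s [] = t v" "canon t (v @ [Lft]) = Pt (sub s [Lft])"
        "canon t (v @ [Rgt]) = Pt (sub s [Rgt])" unfolding isPat_def by blast
      have "sub t (v @ [d]) = sub s [d]" if "canon t (v @ [d]) = Pt (sub s [d])" for d
        using that unfolding canon_def by (auto split: if_splits)
      then have "sub (sub t v) [Lft] = sub s [Lft]" "sub (sub t v) [Rgt] = sub s [Rgt]" using s by auto
      then have "sub t v = s" using s(2) tree_eq_children[of "sub t v" s] by simp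
      then show False using False s(1) by simp
    qed
    have cv: "canon t v = Core (truetyp A (sub t v))" using False unfolding canon_def by simp
    show ?thesis unfolding atrans_def mem_Collect_eq case_prod_conv
      using T np canAS[of v] canAS[of "v @ [Lft]"] canAS[of "v @ [Rgt]"] cv by blast
  qed
  have comp: "comp_from (Bpta A) (\<rho> []) t \<rho>"
    unfolding comp_from_def \<rho>_def
  proof (intro conjI allI)
    fix v
    have trB: "trans (Bpta A) = (\<lambda>(x, a, y, z). (enc A x, a, enc A y, enc A z)) ` atrans A"
      by (simp add: Bpta_def)
    show "(enc A (canon t v), t v, enc A (canon t (v @ [Lft])), enc A (canon t (v @ [Rgt]))) \<in> trans (Bpta A)"
      unfolding trB by (rule image_eqI[OF _ tr[of v]]) simp
  qed simp
  have init: "\<rho> [] \<in> initial (Bpta A)"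
  proof -
    have "canon t [] \<in> ainit A"
    proof (cases "t \<in> Pat A")
      case True
      then show ?thesis using tL unfolding canon_def ainit_def by auto
    next
      case False
      obtain q where q: "q \<in> initial A" "t \<in> Lq A q" using tL lang_Lq by blast
      then have "q \<in> states A" using wf unfolding wf_pta_def by blast
      then have "q \<in> truetyp A t \<inter> initial A" using q unfolding truetyp_def by auto
      then show ?thesis using False unfolding canon_def ainit_def truetyp_def by auto
    qed
    then show ?thesis unfolding \<rho>_def Bpta_def by simp
  qed
  obtain \<phi> where \<phi>: "computation A t \<phi>" "accepting A \<phi>" using tL unfolding lang_def ACC_def by blast
  then have c\<phi>: "comp_from A (\<phi> []) t \<phi>" and i\<phi>: "\<phi> [] \<in> initial A" unfolding computation_comp_from by auto
  have s\<phi>: "\<phi> [] \<in> states A" using i\<phi> wf unfolding wf_pta_def by blast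
  have cntq: "countable (Lq A (\<phi> []))"
  proof -
    have "Lq A (\<phi> []) \<subseteq> lang A" using lang_Lq[of A] i\<phi> by auto
    then show ?thesis using cnt by (rule countable_subset)
  qed
  have acc: "accepting (Bpta A) \<rho>"
    unfolding accepting_accseq
  proof
    fix b
    obtain m where m: "Reg (card (states A) + card (states A) * card (states A)) (sub t (node b m))"
      using branch_hits_Reg[OF wf c\<phi> \<phi>(2) s\<phi> cntq] by blast
    have "\<forall>n\<ge>m. color (Bpta A) (\<rho> (node b n)) = 0"
    proof (intro allI impI)
      fix n assume "m \<le> n"
      then obtain z where "node b n = node b m @ z" using node_prefix by blast
      then have "sub t (node b n) = sub (sub t (node b m)) z" by simp
      then have "sub t (node b n) \<in> Pat A" using Reg_sub[OF m] unfolding Pat_def KK_def by simp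
      then show "color (Bpta A) (\<rho> (node b n)) = 0" unfolding \<rho>_def canon_def by (simp add: color_enc)
    qed
    then show "accseq (\<lambda>n. color (Bpta A) (\<rho> (node b n)))" using accseq_const_eventually by fastforce
  qed
  have "\<rho> \<in> ACC (Bpta A) t" unfolding ACC_def computation_comp_from using comp init acc by simp
  then show ?thesis unfolding lang_def by blast
qed

end

theorem proposition8p1:
  fixes L :: "('a::finite) tree set"
  assumes "regular L" and "countable L"
  shows "unambiguous L"
proof -
  obtain A where A: "wf_pta A" "L = lang A" using assms(1) unfolding regular_def by blast
  have cA: "countable (lang A)" using A(2) assms(2) by simp
  interpret Bctx A by (rule Bctx.intro[OF A(1) cA])
  have "L = lang (Bpta A)" using A(2) B_sound B_complete by blast
  moreover have "finite (ACC (Bpta A) t) \<and> card (ACC (Bpta A) t) \<le> 1" for t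
  proof (cases "ACC (Bpta A) t = {}")
    case True
    then show ?thesis by simp
  next
    case False
    then obtain \<rho> where \<rho>: "\<rho> \<in> ACC (Bpta A) t" by blast
    then have sub1: "ACC (Bpta A) t \<subseteq> {\<rho>}" using B_unique by blast
    have "finite (ACC (Bpta A) t)" by (rule finite_subset[OF sub1]) simp
    moreover have "card (ACC (Bpta A) t) \<le> card {\<rho>}" by (rule card_mono[OF _ sub1]) simp
    ultimately show ?thesis by simp
  qed
  ultimately show ?thesis unfolding unambiguous_def using wfB by blast
qed

end
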